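(* Let $c\in\mathbb{R}\setminus\{0\}$. The group of direct isometries of the hyperboloid $(H,\mathrm{g}_c)$ satisfies $$\mathrm{Isom}_+(H,\mathrm{g}_c)=\ker(S_c)\cong\mathrm{PSL}(2,\mathbb{R}),$$ where $\mathrm{Isom}_+(H,\mathrm{g}_c)=\{\varphi\in\mathrm{Diff}_+(\mathbb{T}):(\varphi\times\varphi)^*\mathrm{g}_c=\mathrm{g}_c\}$ and $\ker(S_c)=\{\varphi\in\mathrm{Diff}_+(\mathbb{T}):S_c(\varphi)=0\}$.
   Context: $\mathbb{T}=\mathbb{R}/2\pi\mathbb{Z}$, $H=\mathbb{T}\times\mathbb{T}-\Delta$ with $\Delta$ the diagonal, $\mathrm{g}_c=\dfrac{4c\,d\theta_1d\theta_2}{|e^{i\theta_1}-e^{i\theta_2}|^2}$. $\mathrm{Diff}_+(\mathbb{T})$ acts on $H$ by $\varphi\mapsto\varphi\times\varphi$ (the orientation-preserving conformal diffeomorphisms). $S_c(\varphi)=\tfrac32\big((\varphi\times\varphi)^*\mathrm{g}_c-\mathrm{g}_c\big)|_\Delta$, where the tensor extends smoothly across $\Delta$ and $|_\Delta$ is pullback by $\theta\mapsto(\theta,\theta)$; equivalently $S_c(\varphi)=c\big(S(\varphi)+\tfrac12(\varphi'^2-1)d\theta^2\big)$ with $S(\varphi)=\big(\varphi'''/\varphi'-\tfrac32(\varphi''/\varphi')^2\big)d\theta^2$ computed on a lift of $\varphi$ to $\mathbb{R}$. *)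

theory Defs
  imports "HOL-Analysis.Analysis" "HOL-Algebra.Coset"
begin

text \<open>Elements of Diff_+(T) are represented by their lifts f : R -> R
  (smooth, f' > 0, f(x + 2 pi) = f x + 2 pi), normalised so that 0 <= f 0 < 2 pi;
  this picks exactly one lift per diffeomorphism of T = R/2piZ.\<close>

definition smooth_fun :: "(real \<Rightarrow> real) \<Rightarrow> bool" where
  "smooth_fun f \<longleftrightarrow> (\<forall>n. \<forall>x. ((deriv ^^ n) f) differentiable (at x))"

definition circle_diff_lift :: "(real \<Rightarrow> real) \<Rightarrow> bool" where
  "circle_diff_lift f \<longleftrightarrow> smooth_fun f \<and> (\<forall>x. deriv f x > 0)
     \<and> (\<forall>x. f (x + 2 * pi) = f x + 2 * pi)"

definition normalize_lift :: "(real \<Rightarrow> real) \<Rightarrow> (real \<Rightarrow> real)" where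
  "normalize_lift f = (\<lambda>x. f x - 2 * pi * of_int \<lfloor>f 0 / (2 * pi)\<rfloor>)"

definition DiffT :: "(real \<Rightarrow> real) monoid" where
  "DiffT = \<lparr> carrier = {f. circle_diff_lift f \<and> 0 \<le> f 0 \<and> f 0 < 2 * pi},
             mult = (\<lambda>f g. normalize_lift (f \<circ> g)),
             one = id \<rparr>"

text \<open>(phi x phi)^* g_c = g_c, written in coordinates on H (off the diagonal).\<close>
definition isom_plus :: "real \<Rightarrow> (real \<Rightarrow> real) set" where
  "isom_plus c = {f \<in> carrier DiffT. \<forall>x y. exp (\<i> * complex_of_real x) \<noteq> exp (\<i> * complex_of_real y) \<longrightarrow>
      4 * c * deriv f x * deriv f y / (cmod (exp (\<i> * complex_of_real (f x)) - exp (\<i> * complex_of_real (f y))))\<^sup>2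
      = 4 * c / (cmod (exp (\<i> * complex_of_real x) - exp (\<i> * complex_of_real y)))\<^sup>2}"

text \<open>S_c(phi) = c (S(phi) + (phi'^2 - 1)/2) d theta^2, computed on the lift.\<close>
definition S_c :: "real \<Rightarrow> (real \<Rightarrow> real) \<Rightarrow> real \<Rightarrow> real" where
  "S_c c f x = c * ( (deriv ^^ 3) f x / deriv f x - 3/2 * ((deriv ^^ 2) f x / deriv f x)\<^sup>2
                    + 1/2 * ((deriv f x)\<^sup>2 - 1))"

definition ker_S_c :: "real \<Rightarrow> (real \<Rightarrow> real) set" where
  "ker_S_c c = {f \<in> carrier DiffT. \<forall>x. S_c c f x = 0}"

definition SL2R :: "(real^2^2) monoid" where
  "SL2R = \<lparr> carrier = {A. det A = 1}, mult = (**), one = mat 1 \<rparr>"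

definition PSL2R where
  "PSL2R = SL2R Mod {mat 1, - mat 1}"

end

theory Submission
  imports Defs
begin


inductive_set SC :: "(real \<Rightarrow> real) set" where
  SC_const: "(\<lambda>x. k) \<in> SC"
| SC_cos: "(\<lambda>x. cos (a * x)) \<in> SC"
| SC_sin: "(\<lambda>x. sin (a * x)) \<in> SC"
| SC_add: "f \<in> SC \<Longrightarrow> g \<in> SC \<Longrightarrow> (\<lambda>x. f x + g x) \<in> SC"
| SC_mult: "f \<in> SC \<Longrightarrow> g \<in> SC \<Longrightarrow> (\<lambda>x. f x * g x) \<in> SC"
| SC_inv: "f \<in> SC \<Longrightarrow> (\<forall>x. f x \<noteq> 0) \<Longrightarrow> (\<lambda>x. 1 / f x) \<in> SC"

lemma SC_has_deriv: "f \<in> SC \<Longrightarrow> \<exists>g\<in>SC. \<forall>x. (f has_real_derivative g x) (at x)"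
proof (induction rule: SC.induct)
  case (SC_const k)
  then show ?case by (intro bexI[of _ "\<lambda>x. 0"]) (auto intro: SC.intros)
next
  case (SC_cos a)
  have "(\<lambda>x. (- a) * sin (a * x)) \<in> SC" by (intro SC.intros)
  moreover have "\<forall>x. ((\<lambda>x. cos (a * x)) has_real_derivative (- a) * sin (a * x)) (at x)"
    by (auto intro!: derivative_eq_intros)
  ultimately show ?case by (intro bexI[of _ "\<lambda>x. (- a) * sin (a * x)"]) auto
next
  case (SC_sin a)
  have "(\<lambda>x. a * cos (a * x)) \<in> SC" by (intro SC.intros)
  moreover have "\<forall>x. ((\<lambda>x. sin (a * x)) has_real_derivative a * cos (a * x)) (at x)"
    by (auto intro!: derivative_eq_intros)
  ultimately show ?case by (intro bexI[of _ "\<lambda>x. a * cos (a * x)"]) auto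
next
  case (SC_add f g)
  then obtain f' g' where "f' \<in> SC" "g' \<in> SC" "\<forall>x. (f has_real_derivative f' x) (at x)"
    "\<forall>x. (g has_real_derivative g' x) (at x)" by blast
  then show ?case
    by (intro bexI[of _ "\<lambda>x. f' x + g' x"]) (auto intro!: derivative_eq_intros SC.intros)
next
  case (SC_mult f g)
  then obtain f' g' where "f' \<in> SC" "g' \<in> SC" "\<forall>x. (f has_real_derivative f' x) (at x)"
    "\<forall>x. (g has_real_derivative g' x) (at x)" by blast
  then show ?case
    by (intro bexI[of _ "\<lambda>x. f' x * g x + f x * g' x"])
      (auto intro!: derivative_eq_intros SC.intros simp: SC_mult.hyps)
next
  case (SC_inv f)
  then obtain f' where f': "f' \<in> SC" "\<forall>x. (f has_real_derivative f' x) (at x)" by blast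
  have "(\<lambda>x. f' x * ((\<lambda>x. -1) x * ((\<lambda>x. 1 / f x) x * (\<lambda>x. 1 / f x) x))) \<in> SC"
    using f' SC_inv by (intro SC.intros) auto
  moreover have "\<forall>x. ((\<lambda>x. 1 / f x) has_real_derivative f' x * (-1 * (1 / f x * (1 / f x)))) (at x)"
    using f' SC_inv.hyps(2)
    by (auto intro!: derivative_eq_intros simp: field_simps power2_eq_square)
  ultimately show ?case by auto
qed

lemma SC_deriv: "f \<in> SC \<Longrightarrow> deriv f \<in> SC"
proof -
  assume "f \<in> SC"
  then obtain g where g: "g \<in> SC" "\<forall>x. (f has_real_derivative g x) (at x)"
    using SC_has_deriv by blast
  then have "deriv f = g" by (auto intro!: ext DERIV_imp_deriv)
  with g show ?thesis by simp
qed

lemma SC_differentiable: "f \<in> SC \<Longrightarrow> f differentiable (at x)"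
  using SC_has_deriv real_differentiable_def by blast

lemma SC_funpow: "f \<in> SC \<Longrightarrow> (deriv ^^ n) f \<in> SC"
  by (induction n) (auto intro: SC_deriv)

lemma smooth_funI:
  assumes "\<forall>x. f differentiable (at x)" "deriv f \<in> SC"
  shows "smooth_fun f"
  unfolding smooth_fun_def
proof (intro allI)
  fix n x
  show "(deriv ^^ n) f differentiable at x"
  proof (cases n)
    case 0 then show ?thesis using assms by simp
  next
    case (Suc m)
    then have "(deriv ^^ n) f = (deriv ^^ m) (deriv f)" by (simp add: funpow_Suc_right del: funpow.simps)
    then show ?thesis using SC_funpow[OF assms(2)] SC_differentiable by simp
  qed
qed


definition rep :: "real \<Rightarrow> real \<Rightarrow> real \<Rightarrow> real \<Rightarrow> (real \<Rightarrow> real) \<Rightarrow> bool" where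
  "rep a b c d f \<longleftrightarrow> (\<forall>x. f differentiable (at x)) \<and> (\<forall>x. deriv f x > 0) \<and>
     (\<forall>x. cos (f x / 2) / sqrt (deriv f x) = a * cos (x / 2) + b * sin (x / 2) \<and>
          sin (f x / 2) / sqrt (deriv f x) = c * cos (x / 2) + d * sin (x / 2))"

definition Dm :: "real \<Rightarrow> real \<Rightarrow> real \<Rightarrow> real \<Rightarrow> real \<Rightarrow> real" where
  "Dm a b c d x = (a * cos (x / 2) + b * sin (x / 2))\<^sup>2 + (c * cos (x / 2) + d * sin (x / 2))\<^sup>2"

lemma Dm_alt: "Dm a b c d x = (a\<^sup>2 + b\<^sup>2 + c\<^sup>2 + d\<^sup>2) / 2 + ((a\<^sup>2 + c\<^sup>2 - b\<^sup>2 - d\<^sup>2) / 2) * cos x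
   + (a * b + c * d) * sin x"
proof -
  have cx: "cos x = (cos (x/2))\<^sup>2 - (sin (x/2))\<^sup>2" using cos_double[of "x/2"] by simp
  have sx: "sin x = 2 * sin (x/2) * cos (x/2)" using sin_double[of "x/2"] by simp
  have p: "(sin (x/2))\<^sup>2 + (cos (x/2))\<^sup>2 = 1" by simp
  have gen: "\<And>C S::real. S\<^sup>2 + C\<^sup>2 = 1 \<Longrightarrow> (a * C + b * S)\<^sup>2 + (c * C + d * S)\<^sup>2 =
     (a\<^sup>2 + b\<^sup>2 + c\<^sup>2 + d\<^sup>2) / 2 + ((a\<^sup>2 + c\<^sup>2 - b\<^sup>2 - d\<^sup>2) / 2) * (C\<^sup>2 - S\<^sup>2) + (a * b + c * d) * (2 * S * C)"
  proof -
    fix C S :: real assume h: "S\<^sup>2 + C\<^sup>2 = 1"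
    have "(a * C + b * S)\<^sup>2 + (c * C + d * S)\<^sup>2 = (a\<^sup>2 + c\<^sup>2) * C\<^sup>2 + (b\<^sup>2 + d\<^sup>2) * S\<^sup>2 + (a * b + c * d) * (2 * S * C)"
      by (simp add: power2_eq_square algebra_simps)
    also have "\<dots> = (a\<^sup>2 + c\<^sup>2) * C\<^sup>2 * (S\<^sup>2 + C\<^sup>2) + (b\<^sup>2 + d\<^sup>2) * S\<^sup>2 * (S\<^sup>2 + C\<^sup>2) + (a * b + c * d) * (2 * S * C)"
      using h by simp
    also have "\<dots> = ((a\<^sup>2 + b\<^sup>2 + c\<^sup>2 + d\<^sup>2) / 2) * (S\<^sup>2 + C\<^sup>2)\<^sup>2 + ((a\<^sup>2 + c\<^sup>2 - b\<^sup>2 - d\<^sup>2) / 2) * (C\<^sup>2 - S\<^sup>2) * (S\<^sup>2 + C\<^sup>2) + (a * b + c * d) * (2 * S * C)"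
      by (simp add: power2_eq_square algebra_simps divide_simps)
    also have "\<dots> = (a\<^sup>2 + b\<^sup>2 + c\<^sup>2 + d\<^sup>2) / 2 + ((a\<^sup>2 + c\<^sup>2 - b\<^sup>2 - d\<^sup>2) / 2) * (C\<^sup>2 - S\<^sup>2) + (a * b + c * d) * (2 * S * C)"
      using h by simp
    finally show "?thesis C S" .
  qed
  show ?thesis unfolding Dm_def cx sx by (rule gen[OF p])
qed

lemma Dm_pos:
  assumes "a * d - b * c = 1" shows "Dm a b c d x > 0"
proof -
  have "Dm a b c d x \<ge> 0" unfolding Dm_def by simp
  moreover have "Dm a b c d x \<noteq> 0"
  proof
    assume "Dm a b c d x = 0"
    then have h1: "a * cos (x / 2) + b * sin (x / 2) = 0" and h2: "c * cos (x / 2) + d * sin (x / 2) = 0"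
      unfolding Dm_def by (simp_all add: sum_power2_eq_zero_iff)
    have "cos (x/2) = (a * d - b * c) * cos (x/2)" using assms by simp
    also have "\<dots> = d * (a * cos (x / 2) + b * sin (x / 2)) - b * (c * cos (x / 2) + d * sin (x / 2))"
      by (simp add: algebra_simps)
    finally have c0: "cos (x/2) = 0" using h1 h2 by simp
    have "sin (x/2) = (a * d - b * c) * sin (x/2)" using assms by simp
    also have "\<dots> = a * (c * cos (x / 2) + d * sin (x / 2)) - c * (a * cos (x / 2) + b * sin (x / 2))"
      by (simp add: algebra_simps)
    finally have s0: "sin (x/2) = 0" using h1 h2 by simp
    show False using sin_cos_squared_add[of "x/2"] c0 s0 by simp
  qed
  ultimately show ?thesis by simp
qed

lemma Dm_SC: "(\<lambda>x. Dm a b c d x) \<in> SC"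
proof -
  have e: "(\<lambda>x. Dm a b c d x) = (\<lambda>x. (\<lambda>x. (\<lambda>x. (\<lambda>x. a) x * (\<lambda>x. cos ((1/2) * x)) x + (\<lambda>x. (\<lambda>x. b) x * (\<lambda>x. sin ((1/2) * x)) x) x) x *
     (\<lambda>x. (\<lambda>x. a) x * (\<lambda>x. cos ((1/2) * x)) x + (\<lambda>x. (\<lambda>x. b) x * (\<lambda>x. sin ((1/2) * x)) x) x) x) x
     + (\<lambda>x. (\<lambda>x. (\<lambda>x. c) x * (\<lambda>x. cos ((1/2) * x)) x + (\<lambda>x. (\<lambda>x. d) x * (\<lambda>x. sin ((1/2) * x)) x) x) x *
     (\<lambda>x. (\<lambda>x. c) x * (\<lambda>x. cos ((1/2) * x)) x + (\<lambda>x. (\<lambda>x. d) x * (\<lambda>x. sin ((1/2) * x)) x) x) x) x)"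
    by (simp add: Dm_def power2_eq_square)
  show ?thesis unfolding e by (intro SC.intros)
qed

lemma rep_deriv:
  assumes "rep a b c d f" shows "deriv f x = 1 / Dm a b c d x"
proof -
  from assms have p: "deriv f x > 0" and e1: "cos (f x / 2) / sqrt (deriv f x) = a * cos (x / 2) + b * sin (x / 2)"
    and e2: "sin (f x / 2) / sqrt (deriv f x) = c * cos (x / 2) + d * sin (x / 2)"
    unfolding rep_def by auto
  have "Dm a b c d x = (cos (f x / 2) / sqrt (deriv f x))\<^sup>2 + (sin (f x / 2) / sqrt (deriv f x))\<^sup>2"
    unfolding Dm_def e1 e2 ..
  also have "\<dots> = ((cos (f x / 2))\<^sup>2 + (sin (f x / 2))\<^sup>2) / deriv f x"
    using p by (simp add: power_divide flip: add_divide_distrib)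
  also have "\<dots> = 1 / deriv f x" by simp
  finally show ?thesis using p by simp
qed

lemma rep_deriv_fun: "rep a b c d f \<Longrightarrow> deriv f = (\<lambda>x. 1 / Dm a b c d x)"
  using rep_deriv by blast

lemma rep_Dm_pos: "rep a b c d f \<Longrightarrow> Dm a b c d x > 0"
  using rep_deriv[of a b c d f x] unfolding rep_def by (metis zero_less_divide_1_iff)

lemma rep_smooth: "rep a b c d f \<Longrightarrow> smooth_fun f"
  apply (rule smooth_funI)
   apply (simp add: rep_def)
  apply (simp add: rep_deriv_fun)
  apply (rule SC_inv[OF Dm_SC])
  using rep_Dm_pos by (metis less_irrefl)


lemma cmod_exp_diff:
  "(cmod (exp (\<i> * complex_of_real a) - exp (\<i> * complex_of_real b)))\<^sup>2 = 4 * (sin ((a - b) / 2))\<^sup>2"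
proof -
  have "(cmod (exp (\<i> * complex_of_real a) - exp (\<i> * complex_of_real b)))\<^sup>2 = (cmod (cis a - cis b))\<^sup>2"
    by (simp add: cis_conv_exp)
  also have "\<dots> = (cos a - cos b)\<^sup>2 + (sin a - sin b)\<^sup>2"
    by (simp add: cmod_power2)
  also have "\<dots> = 2 - 2 * cos (a - b)"
    by (simp add: cos_diff power2_eq_square algebra_simps)
  also have "cos (a - b) = 1 - 2 * (sin ((a - b) / 2))\<^sup>2"
  proof -
    have "2 * ((a - b) / 2) = a - b" by simp
    then show ?thesis using cos_double_sin[of "(a - b) / 2"] by metis
  qed
  finally show ?thesis by simp
qed

lemma rep_cs:
  assumes r: "rep a b c d f"
  shows "cos (f x / 2) = sqrt (deriv f x) * (a * cos (x / 2) + b * sin (x / 2))"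
    "sin (f x / 2) = sqrt (deriv f x) * (c * cos (x / 2) + d * sin (x / 2))"
proof -
  from r have p: "deriv f x > 0" and e1: "cos (f x / 2) / sqrt (deriv f x) = a * cos (x / 2) + b * sin (x / 2)"
    and e2: "sin (f x / 2) / sqrt (deriv f x) = c * cos (x / 2) + d * sin (x / 2)"
    unfolding rep_def by auto
  have sp: "sqrt (deriv f x) \<noteq> 0" using p by simp
  show "cos (f x / 2) = sqrt (deriv f x) * (a * cos (x / 2) + b * sin (x / 2))"
    unfolding e1[symmetric] using sp by simp
  show "sin (f x / 2) = sqrt (deriv f x) * (c * cos (x / 2) + d * sin (x / 2))"
    unfolding e2[symmetric] using sp by simp
qed

lemma sin_sq_swap: "(sin ((y - x) / 2))\<^sup>2 = (sin (((x::real) - y) / 2))\<^sup>2"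
proof -
  have "(y - x) / 2 = - ((x - y) / 2)" by (simp add: field_simps)
  then have "sin ((y - x) / 2) = - sin ((x - y) / 2)" by (metis sin_minus)
  then show ?thesis by simp
qed

lemma rep_det:
  assumes r: "rep a b c d f" and h: "a * d - b * c = 1"
  shows "(sin ((f y - f x) / 2))\<^sup>2 = deriv f x * deriv f y * (sin ((y - x) / 2))\<^sup>2"
proof -
  from r have px: "deriv f x > 0" and py: "deriv f y > 0" unfolding rep_def by auto
  from r have cx: "cos (f x / 2) = sqrt (deriv f x) * (a * cos (x / 2) + b * sin (x / 2))"
    and sx: "sin (f x / 2) = sqrt (deriv f x) * (c * cos (x / 2) + d * sin (x / 2))"
    and cy: "cos (f y / 2) = sqrt (deriv f y) * (a * cos (y / 2) + b * sin (y / 2))"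
    and sy: "sin (f y / 2) = sqrt (deriv f y) * (c * cos (y / 2) + d * sin (y / 2))"
    using rep_cs[OF r] by auto
  have "sin ((f y - f x) / 2) = sin (f y / 2 - f x / 2)" by (simp add: diff_divide_distrib)
  also have "\<dots> = sin (f y / 2) * cos (f x / 2) - cos (f y / 2) * sin (f x / 2)" by (rule sin_diff)
  also have "\<dots> = sqrt (deriv f x) * sqrt (deriv f y) *
      ((a * d - b * c) * (sin (y / 2) * cos (x / 2) - cos (y / 2) * sin (x / 2)))"
    unfolding cx sx cy sy by (simp add: algebra_simps)
  also have "sin (y / 2) * cos (x / 2) - cos (y / 2) * sin (x / 2) = sin ((y - x) / 2)"
    by (simp add: sin_diff[symmetric] diff_divide_distrib)
  finally have "sin ((f y - f x) / 2) = sqrt (deriv f x) * sqrt (deriv f y) * sin ((y - x) / 2)"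
    using h by simp
  then show ?thesis using px py by (simp add: power_mult_distrib)
qed

lemma rep_isom:
  assumes r: "rep a b c d f" and h: "a * d - b * c = 1" and fc: "f \<in> carrier DiffT" and c0: "c' \<noteq> 0"
  shows "f \<in> isom_plus c'"
  unfolding isom_plus_def
proof (intro CollectI conjI allI impI fc)
  fix x y :: real
  assume ne: "exp (\<i> * complex_of_real x) \<noteq> exp (\<i> * complex_of_real y)"
  have s0: "(sin ((x - y) / 2))\<^sup>2 \<noteq> 0"
    using ne cmod_exp_diff[of x y] by auto
  have sw: "(sin ((y - x) / 2))\<^sup>2 = (sin ((x - y) / 2))\<^sup>2" by (rule sin_sq_swap)
  have sw2: "(sin ((f y - f x) / 2))\<^sup>2 = (sin ((f x - f y) / 2))\<^sup>2" by (rule sin_sq_swap)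
  from r have px: "deriv f x > 0" and py: "deriv f y > 0" unfolding rep_def by auto
  have key: "(sin ((f x - f y) / 2))\<^sup>2 = deriv f x * deriv f y * (sin ((x - y) / 2))\<^sup>2"
    using rep_det[OF r h, of y x] sw sw2 by simp
  show "4 * c' * deriv f x * deriv f y / (cmod (exp (\<i> * complex_of_real (f x)) - exp (\<i> * complex_of_real (f y))))\<^sup>2
      = 4 * c' / (cmod (exp (\<i> * complex_of_real x) - exp (\<i> * complex_of_real y)))\<^sup>2"
    unfolding cmod_exp_diff key using s0 px py by (simp add: field_simps)
qed


lemma rep_ker:
  assumes r: "rep a b c d f" and h: "a * d - b * c = 1" and fc: "f \<in> carrier DiffT"
  shows "f \<in> ker_S_c c'"
proof -
  define a0 where "a0 = (a\<^sup>2 + b\<^sup>2 + c\<^sup>2 + d\<^sup>2) / 2"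
  define P where "P = (a\<^sup>2 + c\<^sup>2 - b\<^sup>2 - d\<^sup>2) / 2"
  define Q where "Q = a * b + c * d"
  define E where "E = (\<lambda>x. a0 + P * cos x + Q * sin x)"
  define E1 where "E1 = (\<lambda>x. Q * cos x - P * sin x)"
  define E2 where "E2 = (\<lambda>x. - P * cos x - Q * sin x)"
  have inv: "a0\<^sup>2 - P\<^sup>2 - Q\<^sup>2 = 1"
  proof -
    have "a0\<^sup>2 - P\<^sup>2 - Q\<^sup>2 = (a * d - b * c)\<^sup>2"
      unfolding a0_def P_def Q_def by (simp add: power2_eq_square algebra_simps divide_simps)
    then show ?thesis using h by simp
  qed
  have EDm: "E x = Dm a b c d x" for x unfolding E_def a0_def P_def Q_def Dm_alt by simp
  have Ep: "E x > 0" for x using EDm Dm_pos[OF h] by simp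
  have dE: "(E has_real_derivative E1 x) (at x)" for x
    unfolding E_def E1_def by (auto intro!: derivative_eq_intros)
  have dE1: "(E1 has_real_derivative E2 x) (at x)" for x
    unfolding E1_def E2_def by (auto intro!: derivative_eq_intros)
  have f1: "deriv f = (\<lambda>x. 1 / E x)" using rep_deriv_fun[OF r] EDm by simp
  have d1: "((\<lambda>x. 1 / E x) has_real_derivative - E1 x / (E x)\<^sup>2) (at x)" for x
    using Ep[of x] by (auto intro!: derivative_eq_intros dE simp: field_simps power2_eq_square)
  have f2: "deriv (\<lambda>x. 1 / E x) = (\<lambda>x. - E1 x / (E x)\<^sup>2)"
    using d1 DERIV_imp_deriv by blast
  have d2: "((\<lambda>x. - E1 x / (E x)\<^sup>2) has_real_derivative (- E2 x / (E x)\<^sup>2 + 2 * (E1 x)\<^sup>2 / (E x)^3)) (at x)" for x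
    using Ep[of x] by (auto intro!: derivative_eq_intros dE dE1 simp: field_simps power2_eq_square power3_eq_cube)
  have f3: "deriv (\<lambda>x. - E1 x / (E x)\<^sup>2) = (\<lambda>x. - E2 x / (E x)\<^sup>2 + 2 * (E1 x)\<^sup>2 / (E x)^3)"
    using d2 DERIV_imp_deriv by blast
  have D2: "(deriv ^^ 2) f = (\<lambda>x. - E1 x / (E x)\<^sup>2)"
    by (simp add: numeral_2_eq_2 f1 f2)
  have D3: "(deriv ^^ 3) f = (\<lambda>x. - E2 x / (E x)\<^sup>2 + 2 * (E1 x)\<^sup>2 / (E x)^3)"
  proof -
    have "(deriv ^^ 3) f = deriv ((deriv ^^ 2) f)" by (simp add: numeral_3_eq_3 numeral_2_eq_2)
    then show ?thesis by (simp only: D2 f3)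
  qed
  have S0: "S_c c' f x = 0" for x
  proof -
    have e2: "E2 x = a0 - E x" unfolding E2_def E_def by simp
    have e1: "(E1 x)\<^sup>2 = P\<^sup>2 + Q\<^sup>2 - (E x - a0)\<^sup>2"
    proof -
      have g: "\<And>C S::real. (Q * C - P * S)\<^sup>2 + (P * C + Q * S)\<^sup>2 = (P\<^sup>2 + Q\<^sup>2) * (S\<^sup>2 + C\<^sup>2)"
        by (simp add: power2_eq_square algebra_simps)
      have "(E1 x)\<^sup>2 + (E x - a0)\<^sup>2 = (P\<^sup>2 + Q\<^sup>2) * ((sin x)\<^sup>2 + (cos x)\<^sup>2)"
        unfolding E1_def E_def using g[of "cos x" "sin x"] by simp
      then show ?thesis by simp
    qed
    have "S_c c' f x = c' * ((- E2 x / (E x)\<^sup>2 + 2 * (E1 x)\<^sup>2 / (E x)^3) / (1 / E x)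
        - 3/2 * ((- E1 x / (E x)\<^sup>2) / (1 / E x))\<^sup>2 + 1/2 * ((1 / E x)\<^sup>2 - 1))"
      unfolding S_c_def D2 D3 f1 ..
    also have "\<dots> = c' * ((- 2 * E2 x * E x + (E1 x)\<^sup>2 + 1 - (E x)\<^sup>2) / (2 * (E x)\<^sup>2))"
      using Ep[of x] by (simp add: field_simps power2_eq_square power3_eq_cube)
    also have "- 2 * E2 x * E x + (E1 x)\<^sup>2 + 1 - (E x)\<^sup>2 = P\<^sup>2 + Q\<^sup>2 - a0\<^sup>2 + 1"
      unfolding e1 e2 by (simp add: power2_eq_square algebra_simps)
    also have "\<dots> = 0" using inv by simp
    finally show ?thesis by simp
  qed
  show ?thesis unfolding ker_S_c_def using fc S0 by simp
qed


lemma carrier_props: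
  assumes "f \<in> carrier DiffT"
  shows "\<And>x. deriv f x > 0" "\<And>x. f (x + 2 * pi) = f x + 2 * pi"
    "\<And>n x. ((deriv ^^ n) f has_real_derivative (deriv ^^ (Suc n)) f x) (at x)"
    "0 \<le> f 0" "f 0 < 2 * pi"
proof -
  from assms have cd: "circle_diff_lift f" and "0 \<le> f 0" "f 0 < 2 * pi" by (auto simp: DiffT_def)
  then show "\<And>x. deriv f x > 0" "\<And>x. f (x + 2 * pi) = f x + 2 * pi" "0 \<le> f 0" "f 0 < 2 * pi"
    by (auto simp: circle_diff_lift_def)
  fix n x
  from cd have "(deriv ^^ n) f differentiable (at x)" by (auto simp: circle_diff_lift_def smooth_fun_def)
  then show "((deriv ^^ n) f has_real_derivative (deriv ^^ (Suc n)) f x) (at x)"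
    using DERIV_deriv_iff_real_differentiable by auto
qed

lemma ode_unique:
  fixes Y Y1 :: "real \<Rightarrow> real"
  assumes "\<And>x. (Y has_real_derivative Y1 x) (at x)" "\<And>x. (Y1 has_real_derivative - Y x / 4) (at x)"
    "Y 0 = 0" "Y1 0 = 0"
  shows "Y x = 0"
proof -
  define En where "En = (\<lambda>x. (Y1 x)\<^sup>2 + (Y x)\<^sup>2 / 4)"
  have "\<forall>x. (En has_real_derivative 0) (at x)"
  proof
    fix x
    show "(En has_real_derivative 0) (at x)" unfolding En_def
      by (auto intro!: derivative_eq_intros assms)
  qed
  then have "En x = En 0" by (rule DERIV_isconst_all)
  then have "(Y1 x)\<^sup>2 + (Y x)\<^sup>2 / 4 = 0" using assms by (simp add: En_def)
  moreover have "0 \<le> (Y1 x)\<^sup>2" "0 \<le> (Y x)\<^sup>2" by simp_all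
  ultimately have "(Y x)\<^sup>2 = 0" by linarith
  then show ?thesis by simp
qed


lemma alg_det: "(s::real) > 0 \<Longrightarrow> (C / s) * (- F2 * Sn / (2 * s ^ 3) + s * C / 2)
   - (- F2 * C / (2 * s ^ 3) - s * Sn / 2) * (Sn / s) = (C\<^sup>2 + Sn\<^sup>2) / 2"
  by (simp add: field_simps power2_eq_square power3_eq_cube)

lemma ode_rep:
  fixes f f2 f3 s :: "real \<Rightarrow> real"
  assumes df: "\<And>x. (f has_real_derivative s x * s x) (at x)"
   and df2: "\<And>x. (f2 has_real_derivative f3 x) (at x)"
   and ds: "\<And>x. (s has_real_derivative f2 x / (2 * s x)) (at x)"
   and sp: "\<And>x. s x > 0"
   and S: "\<And>x. f3 x = s x ^ 2 * (3/2 * (f2 x / s x ^ 2)\<^sup>2 - 1/2 * ((s x ^ 2)\<^sup>2 - 1))"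
  shows "\<exists>a b c d. a * d - b * c = 1 \<and> (\<forall>x. cos (f x / 2) / s x = a * cos (x / 2) + b * sin (x / 2)
     \<and> sin (f x / 2) / s x = c * cos (x / 2) + d * sin (x / 2))"
proof -
  define u where "u = (\<lambda>x. cos (f x / 2) / s x)"
  define u1 where "u1 = (\<lambda>x. - f2 x * cos (f x / 2) / (2 * s x ^ 3) - s x * sin (f x / 2) / 2)"
  define w where "w = (\<lambda>x. sin (f x / 2) / s x)"
  define w1 where "w1 = (\<lambda>x. - f2 x * sin (f x / 2) / (2 * s x ^ 3) + s x * cos (f x / 2) / 2)"
  have du: "(u has_real_derivative u1 x) (at x)" for x
    unfolding u_def u1_def
    apply (auto intro!: derivative_eq_intros df ds)
    using sp[of x] apply (simp_all add: field_simps power3_eq_cube)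
    done
  have dw: "(w has_real_derivative w1 x) (at x)" for x
    unfolding w_def w1_def
    apply (auto intro!: derivative_eq_intros df ds)
    using sp[of x] apply (simp_all add: field_simps power3_eq_cube)
    done
  have du1: "(u1 has_real_derivative - u x / 4) (at x)" for x
    unfolding u_def u1_def
    apply (auto intro!: derivative_eq_intros df ds df2)
    using sp[of x] apply simp
    unfolding S using sp[of x] apply (simp add: field_simps power2_eq_square power3_eq_cube)
    apply algebra
    done
  have dw1: "(w1 has_real_derivative - w x / 4) (at x)" for x
    unfolding w_def w1_def
    apply (auto intro!: derivative_eq_intros df ds df2)
    using sp[of x] apply simp
    unfolding S using sp[of x] apply (simp add: field_simps power2_eq_square power3_eq_cube)
    apply algebra
    done
  define a where "a = u 0"
  define b where "b = 2 * u1 0"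
  define c where "c = w 0"
  define d where "d = 2 * w1 0"
  have U: "u x = a * cos (x / 2) + b * sin (x / 2)" for x
  proof -
    have "(\<lambda>x. u x - (a * cos (x / 2) + b * sin (x / 2))) x = 0"
      by (rule ode_unique[of "\<lambda>x. u x - (a * cos (x / 2) + b * sin (x / 2))" "\<lambda>x. u1 x - (- a / 2 * sin (x / 2) + b / 2 * cos (x / 2))" x])
        (auto intro!: derivative_eq_intros du du1 simp: algebra_simps a_def b_def)
    then show ?thesis by simp
  qed
  have W: "w x = c * cos (x / 2) + d * sin (x / 2)" for x
  proof -
    have "(\<lambda>x. w x - (c * cos (x / 2) + d * sin (x / 2))) x = 0"
      by (rule ode_unique[of "\<lambda>x. w x - (c * cos (x / 2) + d * sin (x / 2))" "\<lambda>x. w1 x - (- c / 2 * sin (x / 2) + d / 2 * cos (x / 2))" x])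
        (auto intro!: derivative_eq_intros dw dw1 simp: algebra_simps c_def d_def)
    then show ?thesis by simp
  qed
  have det: "a * d - b * c = 1"
  proof -
    have "a * d - b * c = 2 * (u 0 * w1 0 - u1 0 * w 0)" by (simp add: a_def b_def c_def d_def)
    also have "u 0 * w1 0 - u1 0 * w 0 = ((cos (f 0 / 2))\<^sup>2 + (sin (f 0 / 2))\<^sup>2) / 2"
      unfolding u_def u1_def w_def w1_def using sp[of 0] alg_det by blast
    finally show ?thesis by simp
  qed
  show ?thesis using U W det unfolding u_def w_def by blast
qed

lemma carrier_deriv:
  assumes fc: "f \<in> carrier DiffT"
  shows "\<And>x. (f has_real_derivative deriv f x) (at x)"
    "\<And>x. (deriv f has_real_derivative (deriv ^^ 2) f x) (at x)"
    "\<And>x. ((deriv ^^ 2) f has_real_derivative (deriv ^^ 3) f x) (at x)"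
    "\<And>x. f differentiable (at x)"
proof -
  fix x
  show "(f has_real_derivative deriv f x) (at x)"
    using carrier_props(3)[OF fc, of 0 x] by simp
  then show "f differentiable (at x)" using real_differentiable_def by blast
  show "(deriv f has_real_derivative (deriv ^^ 2) f x) (at x)"
    using carrier_props(3)[OF fc, of 1 x] by (simp add: numeral_2_eq_2)
  show "((deriv ^^ 2) f has_real_derivative (deriv ^^ 3) f x) (at x)"
    using carrier_props(3)[OF fc, of 2 x] by (simp add: numeral_3_eq_3)
qed

lemma ker_rep:
  assumes fc: "f \<in> carrier DiffT" and S: "\<And>x. S_c c' f x = 0" and c0: "c' \<noteq> 0"
  shows "\<exists>a b c d. a * d - b * c = 1 \<and> rep a b c d f"
proof -
  define f1 where "f1 = deriv f"
  define f2 where "f2 = (deriv ^^ 2) f"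
  define f3 where "f3 = (deriv ^^ 3) f"
  have p: "f1 x > 0" for x using carrier_props(1)[OF fc] f1_def by simp
  define s where "s = (\<lambda>x. sqrt (f1 x))"
  have sp: "s x > 0" for x using p s_def by simp
  have ss: "s x * s x = f1 x" for x using p[of x] by (simp add: s_def abs_of_pos)
  have df: "(f has_real_derivative s x * s x) (at x)" for x
    using carrier_deriv(1)[OF fc, of x] ss[of x] f1_def by simp
  have df1: "(f1 has_real_derivative f2 x) (at x)" for x
    using carrier_deriv(2)[OF fc, of x] f1_def f2_def by simp
  have df2: "(f2 has_real_derivative f3 x) (at x)" for x
    using carrier_deriv(3)[OF fc, of x] f3_def f2_def by simp
  have ds: "(s has_real_derivative f2 x / (2 * s x)) (at x)" for x
    unfolding s_def using p[of x] 
    apply (auto intro!: derivative_eq_intros df1)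
    apply (simp add: divide_simps)
    done
  have S': "f3 x = s x ^ 2 * (3/2 * (f2 x / s x ^ 2)\<^sup>2 - 1/2 * ((s x ^ 2)\<^sup>2 - 1))" for x
  proof -
    have "f3 x / f1 x - 3/2 * (f2 x / f1 x)\<^sup>2 + 1/2 * ((f1 x)\<^sup>2 - 1) = 0"
      using S[of x] c0 unfolding S_c_def f1_def f2_def f3_def by simp
    moreover have "s x ^ 2 = f1 x" using ss[of x] by (simp add: power2_eq_square)
    ultimately show ?thesis using p[of x] by (simp add: field_simps)
  qed
  obtain a b c d where det: "a * d - b * c = 1" and e: "\<forall>x. cos (f x / 2) / s x = a * cos (x / 2) + b * sin (x / 2)
     \<and> sin (f x / 2) / s x = c * cos (x / 2) + d * sin (x / 2)"
    using ode_rep[OF df df2 ds sp S'] by blast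
  have "rep a b c d f" unfolding rep_def
    using carrier_deriv(4)[OF fc] carrier_props(1)[OF fc] e by (simp add: s_def f1_def)
  with det show ?thesis by blast
qed


lemma carrier_mono:
  assumes fc: "f \<in> carrier DiffT" and "x < y" shows "f x < f y"
  using assms(2) apply (rule DERIV_pos_imp_increasing)
  using carrier_deriv(1)[OF fc] carrier_props(1)[OF fc] by blast

lemma deriv_periodic:
  assumes fc: "f \<in> carrier DiffT" shows "deriv f (x + 2 * pi) = deriv f x"
proof -
  have e: "(\<lambda>t. f (t + 2 * pi)) = (\<lambda>t. f t + 2 * pi)" using carrier_props(2)[OF fc] by auto
  have "((\<lambda>t. f (t + 2 * pi)) has_real_derivative deriv f (x + 2 * pi)) (at x)"
    using carrier_deriv(1)[OF fc, of "x + 2 * pi"] DERIV_shift by blast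
  then have d1: "((\<lambda>t. f t + 2 * pi) has_real_derivative deriv f (x + 2 * pi)) (at x)" using e by simp
  have d2: "((\<lambda>t. f t + 2 * pi) has_real_derivative deriv f x) (at x)"
    using carrier_deriv(1)[OF fc, of x] by (auto intro!: derivative_eq_intros)
  show ?thesis using DERIV_unique[OF d1 d2] .
qed

lemma isom_sin:
  assumes fi: "f \<in> isom_plus c'" and c0: "c' \<noteq> 0" and sn: "sin ((x - y) / 2) \<noteq> 0"
  shows "(sin ((f x - f y) / 2))\<^sup>2 = deriv f x * deriv f y * (sin ((x - y) / 2))\<^sup>2"
proof -
  have ne: "exp (\<i> * complex_of_real x) \<noteq> exp (\<i> * complex_of_real y)"
  proof
    assume "exp (\<i> * complex_of_real x) = exp (\<i> * complex_of_real y)"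
    then have "(cmod (exp (\<i> * complex_of_real x) - exp (\<i> * complex_of_real y)))\<^sup>2 = 0" by simp
    then show False using sn cmod_exp_diff[of x y] by simp
  qed
  then have eq: "4 * c' * deriv f x * deriv f y / (4 * (sin ((f x - f y) / 2))\<^sup>2)
      = 4 * c' / (4 * (sin ((x - y) / 2))\<^sup>2)"
    using fi unfolding isom_plus_def cmod_exp_diff by blast
  have A: "(sin ((f x - f y) / 2))\<^sup>2 \<noteq> 0"
  proof
    assume "(sin ((f x - f y) / 2))\<^sup>2 = 0"
    then have "4 * c' / (4 * (sin ((x - y) / 2))\<^sup>2) = 0" using eq by simp
    then show False using c0 sn by simp
  qed
  show ?thesis using eq A sn c0 by (simp add: field_simps)
qed

lemma sq_sign_eq: "(x::real)\<^sup>2 = y\<^sup>2 \<Longrightarrow> (0 < x \<and> 0 < y) \<or> (x < 0 \<and> y < 0) \<Longrightarrow> x = y"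
  by (auto simp: power2_eq_iff)

lemma antiper_zero:
  fixes G :: "real \<Rightarrow> real"
  assumes per: "\<And>x. G (x + 2 * pi) = - G x" and z: "\<And>x. 0 \<le> x \<Longrightarrow> x < 2 * pi \<Longrightarrow> G x = 0"
  shows "G x = 0"
proof -
  have ind: "G (y + 2 * pi * real n) = 0 \<longleftrightarrow> G y = 0" for n :: nat and y
  proof (induction n)
    case 0 then show ?case by simp
  next
    case (Suc n)
    have "y + 2 * pi * real (Suc n) = (y + 2 * pi * real n) + 2 * pi" by (simp add: algebra_simps)
    then have "G (y + 2 * pi * real (Suc n)) = - G (y + 2 * pi * real n)" using per by metis
    then show ?case using Suc by simp
  qed
  define k where "k = \<lfloor>x / (2 * pi)\<rfloor>"
  define y where "y = x - 2 * pi * of_int k"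
  have "of_int k \<le> x / (2 * pi)" "x / (2 * pi) < of_int k + 1" unfolding k_def by linarith+
  then have "2 * pi * of_int k \<le> x" "x < 2 * pi * of_int k + 2 * pi"
    using pi_gt_zero by (simp_all add: field_simps)
  then have y0: "0 \<le> y" "y < 2 * pi" unfolding y_def by simp_all
  then have Gy: "G y = 0" by (rule z)
  show ?thesis
  proof (cases "k \<ge> 0")
    case True
    then have "x = y + 2 * pi * real (nat k)" unfolding y_def by simp
    then show ?thesis using ind Gy by simp
  next
    case False
    then have "y = x + 2 * pi * real (nat (- k))" unfolding y_def by simp
    then show ?thesis using ind[of x "nat (- k)"] Gy by simp
  qed
qed


lemma isom_rep:
  assumes fi: "f \<in> isom_plus c'" and c0: "c' \<noteq> 0"
  shows "\<exists>a b c d. a * d - b * c = 1 \<and> rep a b c d f"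
proof -
  have fc: "f \<in> carrier DiffT" using fi unfolding isom_plus_def by simp
  define s where "s = (\<lambda>x. sqrt (deriv f x))"
  have p: "deriv f x > 0" for x using carrier_props(1)[OF fc] by simp
  have sp: "s x > 0" for x using p s_def by simp
  have ss: "s x * s x = deriv f x" for x using p[of x] by (simp add: s_def abs_of_pos)
  define U where "U = (\<lambda>x. cos (f x / 2) / s x)"
  define W where "W = (\<lambda>x. sin (f x / 2) / s x)"
  define dt where "dt = (\<lambda>x y. U x * W y - W x * U y)"
  have dt_eq: "dt x y = sin ((f y - f x) / 2) / (s x * s y)" for x y
  proof -
    have "sin ((f y - f x) / 2) = sin (f y / 2 - f x / 2)" by (simp add: diff_divide_distrib)
    also have "\<dots> = sin (f y / 2) * cos (f x / 2) - cos (f y / 2) * sin (f x / 2)" by (rule sin_diff)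
    finally show ?thesis unfolding dt_def U_def W_def using sp[of x] sp[of y]
      by (simp add: field_simps)
  qed
  have dt_anti: "dt y x = - dt x y" for x y unfolding dt_def by simp
  have dt_main: "dt x y = sin ((y - x) / 2)" if xy: "x < y" "y < x + 2 * pi" for x y
  proof (rule sq_sign_eq)
    have sp2: "0 < sin ((y - x) / 2)" using xy by (intro sin_gt_zero) simp_all
    have sn: "sin ((y - x) / 2) \<noteq> 0" using sp2 by simp
    have "(dt x y)\<^sup>2 = (sin ((f y - f x) / 2))\<^sup>2 / (deriv f x * deriv f y)"
    proof -
      have q: "s x * s y * (s x * s y) = deriv f x * deriv f y"
        by (simp add: ss[symmetric] algebra_simps)
      show ?thesis unfolding dt_eq power_divide using q by (simp add: power2_eq_square)
    qed
    also have "(sin ((f y - f x) / 2))\<^sup>2 = deriv f y * deriv f x * (sin ((y - x) / 2))\<^sup>2"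
      by (rule isom_sin[OF fi c0 sn])
    finally show "(dt x y)\<^sup>2 = (sin ((y - x) / 2))\<^sup>2" using p[of x] p[of y] by simp
    have "f x < f y" using carrier_mono[OF fc xy(1)] .
    moreover have "f y < f x + 2 * pi"
      using carrier_mono[OF fc xy(2)] carrier_props(2)[OF fc, of x] by simp
    ultimately have "0 < sin ((f y - f x) / 2)" by (intro sin_gt_zero) simp_all
    then have "0 < dt x y" unfolding dt_eq using sp[of x] sp[of y] by simp
    then show "0 < dt x y \<and> 0 < sin ((y - x) / 2) \<or> dt x y < 0 \<and> sin ((y - x) / 2) < 0"
      using sp2 by simp
  qed
  define a where "a = U 0"
  define b where "b = U pi"
  define c where "c = W 0"
  define d where "d = W pi"
  have det: "a * d - b * c = 1"
  proof -
    have "a * d - b * c = dt 0 pi" unfolding a_def b_def c_def d_def dt_def by simp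
    also have "\<dots> = 1" using dt_main[of 0 pi] pi_gt_zero by simp
    finally show ?thesis .
  qed
  have main: "U y = a * cos (y / 2) + b * sin (y / 2) \<and> W y = c * cos (y / 2) + d * sin (y / 2)"
    if y: "0 \<le> y" "y < 2 * pi" for y
  proof -
    have P1: "a * W y - c * U y = sin (y / 2)"
    proof (cases "y = 0")
      case True then show ?thesis unfolding a_def c_def by simp
    next
      case False
      then have "dt 0 y = sin ((y - 0) / 2)" using y by (intro dt_main) simp_all
      then show ?thesis unfolding dt_def a_def c_def by simp
    qed
    have P2: "b * W y - d * U y = - cos (y / 2)"
    proof -
      have sc: "sin ((y - pi) / 2) = - cos (y / 2)"
      proof -
        have "(y - pi) / 2 = y / 2 - pi / 2" by (simp add: field_simps)
        then have "sin ((y - pi) / 2) = sin (y / 2 - pi / 2)" by (rule arg_cong)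
        also have "\<dots> = - cos (y / 2)" by (simp add: sin_diff)
        finally show ?thesis .
      qed
      have "dt pi y = sin ((y - pi) / 2)"
      proof (cases y pi rule: linorder_cases)
        case less
        have "dt y pi = sin ((pi - y) / 2)" using less y by (intro dt_main) simp_all
        then show ?thesis using dt_anti[of pi y] sin_minus[of "(pi - y) / 2"]
          by (simp add: minus_divide_left)
      next
        case equal then show ?thesis unfolding dt_def by simp
      next
        case greater then show ?thesis using y by (intro dt_main) simp_all
      qed
      then show ?thesis unfolding dt_def b_def d_def sc by simp
    qed
    have "U y = (a * d - b * c) * U y" using det by simp
    also have "\<dots> = b * (a * W y - c * U y) - a * (b * W y - d * U y)" by (simp add: algebra_simps)
    also have "\<dots> = a * cos (y / 2) + b * sin (y / 2)" unfolding P1 P2 by simp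
    finally have u: "U y = a * cos (y / 2) + b * sin (y / 2)" .
    have "W y = (a * d - b * c) * W y" using det by simp
    also have "\<dots> = d * (a * W y - c * U y) - c * (b * W y - d * U y)" by (simp add: algebra_simps)
    also have "\<dots> = c * cos (y / 2) + d * sin (y / 2)" unfolding P1 P2 by simp
    finally have w: "W y = c * cos (y / 2) + d * sin (y / 2)" .
    show ?thesis using u w by simp
  qed
  have sper: "s (x + 2 * pi) = s x" for x unfolding s_def using deriv_periodic[OF fc] by simp
  have fper: "f (x + 2 * pi) / 2 = f x / 2 + pi" for x using carrier_props(2)[OF fc, of x] by simp
  have hper: "(x + 2 * pi) / 2 = x / 2 + pi" for x :: real by simp
  have Ux: "U x = a * cos (x / 2) + b * sin (x / 2)" for x
  proof -
    have "(\<lambda>x. U x - (a * cos (x / 2) + b * sin (x / 2))) x = 0"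
      apply (rule antiper_zero[of "\<lambda>x. U x - (a * cos (x / 2) + b * sin (x / 2))" x])
      subgoal for x unfolding U_def sper fper hper by simp
      subgoal for x using main by simp
      done
    then show ?thesis by simp
  qed
  have Wx: "W x = c * cos (x / 2) + d * sin (x / 2)" for x
  proof -
    have "(\<lambda>x. W x - (c * cos (x / 2) + d * sin (x / 2))) x = 0"
      apply (rule antiper_zero[of "\<lambda>x. W x - (c * cos (x / 2) + d * sin (x / 2))" x])
      subgoal for x unfolding W_def sper fper hper by simp
      subgoal for x using main by simp
      done
    then show ?thesis by simp
  qed
  have "rep a b c d f" unfolding rep_def
    using carrier_deriv(4)[OF fc] p Ux Wx unfolding U_def W_def s_def by simp
  with det show ?thesis by blast
qed


lemma rep_comp:
  assumes rf: "rep a b c d f" and rg: "rep a' b' c' d' g"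
  shows "rep (a * a' + b * c') (a * b' + b * d') (c * a' + d * c') (c * b' + d * d') (f \<circ> g)"
proof -
  have fd: "\<And>x. (f has_real_derivative deriv f x) (at x)" and gd: "\<And>x. (g has_real_derivative deriv g x) (at x)"
    using rf rg unfolding rep_def by (auto simp: DERIV_deriv_iff_real_differentiable)
  have fp: "\<And>x. deriv f x > 0" and gp: "\<And>x. deriv g x > 0" using rf rg unfolding rep_def by auto
  have cd: "((f \<circ> g) has_real_derivative deriv f (g x) * deriv g x) (at x)" for x
    using DERIV_chain[OF fd gd] .
  then have dc: "deriv (f \<circ> g) x = deriv f (g x) * deriv g x" for x by (rule DERIV_imp_deriv)
  show ?thesis unfolding rep_def
  proof (intro conjI allI)
    fix x
    show "(f \<circ> g) differentiable at x" using cd real_differentiable_def by blast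
    show "0 < deriv (f \<circ> g) x" unfolding dc using fp gp by simp
    have sq: "sqrt (deriv (f \<circ> g) x) = sqrt (deriv f (g x)) * sqrt (deriv g x)"
      unfolding dc by (simp add: real_sqrt_mult)
    have cf: "cos (f (g x) / 2) = sqrt (deriv f (g x)) * (a * cos (g x / 2) + b * sin (g x / 2))"
      and sf: "sin (f (g x) / 2) = sqrt (deriv f (g x)) * (c * cos (g x / 2) + d * sin (g x / 2))"
      using rep_cs[OF rf] by auto
    have cg: "cos (g x / 2) = sqrt (deriv g x) * (a' * cos (x / 2) + b' * sin (x / 2))"
      and sg: "sin (g x / 2) = sqrt (deriv g x) * (c' * cos (x / 2) + d' * sin (x / 2))"
      using rep_cs[OF rg] by auto
    have n1: "sqrt (deriv f (g x)) \<noteq> 0" "sqrt (deriv g x) \<noteq> 0" using fp[of "g x"] gp[of x] by auto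
    show "cos ((f \<circ> g) x / 2) / sqrt (deriv (f \<circ> g) x) =
        (a * a' + b * c') * cos (x / 2) + (a * b' + b * d') * sin (x / 2)"
      unfolding sq unfolding o_def cf cg sg using n1 fp[of "g x"] gp[of x] by (simp add: field_simps)
    show "sin ((f \<circ> g) x / 2) / sqrt (deriv (f \<circ> g) x) =
        (c * a' + d * c') * cos (x / 2) + (c * b' + d * d') * sin (x / 2)"
      unfolding sq unfolding o_def sf cg sg using n1 fp[of "g x"] gp[of x] by (simp add: field_simps)
  qed
qed

lemma rep_shift:
  assumes rf: "rep a b c d f"
  shows "rep a b c d (\<lambda>x. f x - 2 * pi * of_int k) \<and> even k
       \<or> rep (-a) (-b) (-c) (-d) (\<lambda>x. f x - 2 * pi * of_int k) \<and> odd k"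
proof -
  have fd: "\<And>x. (f has_real_derivative deriv f x) (at x)"
    using rf unfolding rep_def by (auto simp: DERIV_deriv_iff_real_differentiable)
  have d: "((\<lambda>x. f x - 2 * pi * of_int k) has_real_derivative deriv f x) (at x)" for x
    using fd[of x] by (auto intro!: derivative_eq_intros)
  then have dd: "deriv (\<lambda>x. f x - 2 * pi * of_int k) x = deriv f x" for x by (rule DERIV_imp_deriv)
  have diff: "(\<lambda>x. f x - 2 * pi * of_int k) differentiable at x" for x using d real_differentiable_def by blast
  have e: "(f x - 2 * pi * of_int k) / 2 = f x / 2 - pi * of_int k" for x by (simp add: field_simps)
  have cs: "cos ((f x - 2 * pi * of_int k) / 2) = (if even k then 1 else -1) * cos (f x / 2)"
    "sin ((f x - 2 * pi * of_int k) / 2) = (if even k then 1 else -1) * sin (f x / 2)" for x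
    unfolding e cos_diff sin_diff by (simp_all add: mult.commute)
  show ?thesis
  proof (cases "even k")
    case True
    then show ?thesis using rf unfolding rep_def dd cs using diff by simp
  next
    case False
    then show ?thesis using rf unfolding rep_def dd cs using diff
      by (simp add: minus_divide_left)
  qed
qed

lemma normalize_eq: "normalize_lift f = (\<lambda>x. f x - 2 * pi * of_int \<lfloor>f 0 / (2 * pi)\<rfloor>)"
  unfolding normalize_lift_def by simp

lemma normalize_range: "0 \<le> normalize_lift f 0 \<and> normalize_lift f 0 < 2 * pi"
proof -
  define k where "k = \<lfloor>f 0 / (2 * pi)\<rfloor>"
  have "of_int k \<le> f 0 / (2 * pi)" "f 0 / (2 * pi) < of_int k + 1" unfolding k_def by linarith+
  then have "2 * pi * of_int k \<le> f 0" "f 0 < 2 * pi * of_int k + 2 * pi"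
    using pi_gt_zero by (simp_all add: field_simps)
  then show ?thesis unfolding normalize_eq k_def[symmetric] by simp
qed

lemma rep_normalize:
  assumes "rep a b c d f"
  shows "rep a b c d (normalize_lift f) \<or> rep (-a) (-b) (-c) (-d) (normalize_lift f)"
  using rep_shift[OF assms] unfolding normalize_eq by blast

lemma rep_carrier:
  assumes r: "rep a b c d f" and per: "\<And>x. f (x + 2 * pi) = f x + 2 * pi"
    and n: "0 \<le> f 0" "f 0 < 2 * pi"
  shows "f \<in> carrier DiffT"
  unfolding DiffT_def circle_diff_lift_def using rep_smooth[OF r] r per n unfolding rep_def by simp

lemma normalize_per:
  assumes per: "\<And>x. f (x + 2 * pi) = f x + 2 * pi"
  shows "\<And>x. normalize_lift f (x + 2 * pi) = normalize_lift f x + 2 * pi"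
  unfolding normalize_eq using per by simp

lemma rep_normalize_carrier:
  assumes r: "rep a b c d f" and per: "\<And>x. f (x + 2 * pi) = f x + 2 * pi"
  shows "normalize_lift f \<in> carrier DiffT"
proof -
  have np: "\<And>x. normalize_lift f (x + 2 * pi) = normalize_lift f x + 2 * pi"
    using per by (simp add: normalize_eq)
  show ?thesis using rep_normalize[OF r] rep_carrier[of _ _ _ _ "normalize_lift f", OF _ np] normalize_range by metis
qed

lemma Dm_neg: "Dm (-a) (-b) (-c) (-d) x = Dm a b c d x"
  unfolding Dm_def by (simp add: power2_eq_square algebra_simps)

lemma rep_unique:
  assumes rf: "rep a b c d f" and rg: "rep a b c d g \<or> rep (-a) (-b) (-c) (-d) g"
    and nf: "0 \<le> f 0" "f 0 < 2 * pi" and ng: "0 \<le> g 0" "g 0 < 2 * pi"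
  shows "f = g"
proof -
  have dg: "deriv g x = 1 / Dm a b c d x" for x
    using rg rep_deriv[of a b c d g x] rep_deriv[of "-a" "-b" "-c" "-d" g x] Dm_neg by auto
  have df: "deriv f x = 1 / Dm a b c d x" for x using rep_deriv[OF rf] .
  have fd: "\<And>x. (f has_real_derivative deriv f x) (at x)"
    using rf unfolding rep_def by (auto simp: DERIV_deriv_iff_real_differentiable)
  have gd: "\<And>x. (g has_real_derivative deriv g x) (at x)"
    using rg unfolding rep_def by (auto simp: DERIV_deriv_iff_real_differentiable)
  have "\<forall>x. ((\<lambda>x. f x - g x) has_real_derivative 0) (at x)"
    using fd gd df dg by (auto intro!: derivative_eq_intros)
  then have const: "f x - g x = f 0 - g 0" for x using DERIV_isconst_all by blast
  have sq: "sqrt (deriv g 0) = sqrt (deriv f 0)" using df dg by simp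
  have sp: "sqrt (deriv f 0) > 0" using rf unfolding rep_def by simp
  have cf: "cos (f 0 / 2) = sqrt (deriv f 0) * a" and sf: "sin (f 0 / 2) = sqrt (deriv f 0) * c"
    using rep_cs[OF rf, of 0] by simp_all
  have r0: "0 \<le> f 0 / 2" "f 0 / 2 \<le> pi" "0 \<le> g 0 / 2" "g 0 / 2 \<le> pi" using nf ng by simp_all
  have "f 0 = g 0"
    using rg
  proof
    assume r: "rep a b c d g"
    have "cos (g 0 / 2) = sqrt (deriv f 0) * a" using rep_cs[OF r, of 0] sq by simp
    then have "f 0 / 2 = g 0 / 2" using cos_inj_pi[OF r0] cf by simp
    then show ?thesis by simp
  next
    assume r: "rep (-a) (-b) (-c) (-d) g"
    have sg: "sin (g 0 / 2) = - sqrt (deriv f 0) * c" and cg: "cos (g 0 / 2) = - sqrt (deriv f 0) * a"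
      using rep_cs[OF r, of 0] sq by simp_all
    have "sin (f 0 / 2) \<ge> 0" "sin (g 0 / 2) \<ge> 0" using r0 sin_ge_zero by auto
    then have "sqrt (deriv f 0) * c = 0" using sf sg by linarith
    then have "c = 0" using sp by simp
    then have z: "sin (f 0 / 2) = 0" "sin (g 0 / 2) = 0" using sf sg by simp_all
    have "f 0 / 2 = 0"
    proof (rule ccontr)
      assume "f 0 / 2 \<noteq> 0"
      then have "0 < sin (f 0 / 2)" using r0 nf by (intro sin_gt_zero) simp_all
      then show False using z by simp
    qed
    moreover have "g 0 / 2 = 0"
    proof (rule ccontr)
      assume "g 0 / 2 \<noteq> 0"
      then have "0 < sin (g 0 / 2)" using r0 ng by (intro sin_gt_zero) simp_all
      then show False using z by simp
    qed
    ultimately show ?thesis by simp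
  qed
  then show ?thesis using const by (auto intro!: ext simp: algebra_simps)
qed

lemma rep_mat_unique:
  assumes "rep a b c d f" "rep a' b' c' d' f"
  shows "a = a' \<and> b = b' \<and> c = c' \<and> d = d'"
proof -
  have "cos (f x / 2) / sqrt (deriv f x) = a * cos (x / 2) + b * sin (x / 2)"
       "cos (f x / 2) / sqrt (deriv f x) = a' * cos (x / 2) + b' * sin (x / 2)"
       "sin (f x / 2) / sqrt (deriv f x) = c * cos (x / 2) + d * sin (x / 2)"
       "sin (f x / 2) / sqrt (deriv f x) = c' * cos (x / 2) + d' * sin (x / 2)" for x
    using assms unfolding rep_def by auto
  from this[of 0] this[of pi] show ?thesis by simp
qed


definition Mf :: "real \<Rightarrow> real \<Rightarrow> real \<Rightarrow> real \<Rightarrow> real \<Rightarrow> real" where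
  "Mf p q r w t = p * (cos t)\<^sup>2 + (q + r) * cos t * sin t + w * (sin t)\<^sup>2"
definition Nf :: "real \<Rightarrow> real \<Rightarrow> real \<Rightarrow> real \<Rightarrow> real \<Rightarrow> real" where
  "Nf p q r w t = r * (cos t)\<^sup>2 + (w - p) * cos t * sin t - q * (sin t)\<^sup>2"
definition Mf' :: "real \<Rightarrow> real \<Rightarrow> real \<Rightarrow> real \<Rightarrow> real \<Rightarrow> real" where
  "Mf' p q r w t = - 2 * p * cos t * sin t + (q + r) * ((cos t)\<^sup>2 - (sin t)\<^sup>2) + 2 * w * cos t * sin t"
definition Nf' :: "real \<Rightarrow> real \<Rightarrow> real \<Rightarrow> real \<Rightarrow> real \<Rightarrow> real" where
  "Nf' p q r w t = - 2 * r * cos t * sin t + (w - p) * ((cos t)\<^sup>2 - (sin t)\<^sup>2) - 2 * q * cos t * sin t"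

lemma dMf: "(Mf p q r w has_real_derivative Mf' p q r w t) (at t)"
  unfolding Mf_def Mf'_def
  apply (auto intro!: derivative_eq_intros)
  apply (simp add: power2_eq_square algebra_simps)
  done

lemma dNf: "(Nf p q r w has_real_derivative Nf' p q r w t) (at t)"
  unfolding Nf_def Nf'_def
  apply (auto intro!: derivative_eq_intros)
  apply (simp add: power2_eq_square algebra_simps)
  done

lemma core_poly:
  fixes c s p q r w :: real
  assumes "c\<^sup>2 + s\<^sup>2 = 1" "p * w - q * r = 1"
  shows "(- 2 * r * c * s + (w - p) * (c\<^sup>2 - s\<^sup>2) - 2 * q * c * s) * (p * c\<^sup>2 + (q + r) * c * s + w * s\<^sup>2)
     - (r * c\<^sup>2 + (w - p) * c * s - q * s\<^sup>2) * (- 2 * p * c * s + (q + r) * (c\<^sup>2 - s\<^sup>2) + 2 * w * c * s)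
     = 1 - (p * c\<^sup>2 + (q + r) * c * s + w * s\<^sup>2)\<^sup>2 - (r * c\<^sup>2 + (w - p) * c * s - q * s\<^sup>2)\<^sup>2"
  using assms by algebra

lemma MN_poly:
  fixes c s p q r w :: real
  assumes "c\<^sup>2 + s\<^sup>2 = 1"
  shows "(p * c\<^sup>2 + (q + r) * c * s + w * s\<^sup>2)\<^sup>2 + (r * c\<^sup>2 + (w - p) * c * s - q * s\<^sup>2)\<^sup>2
     = (p * c + q * s)\<^sup>2 + (r * c + w * s)\<^sup>2"
    "(p * c\<^sup>2 + (q + r) * c * s + w * s\<^sup>2) * c - (r * c\<^sup>2 + (w - p) * c * s - q * s\<^sup>2) * s = p * c + q * s"
    "(p * c\<^sup>2 + (q + r) * c * s + w * s\<^sup>2) * s + (r * c\<^sup>2 + (w - p) * c * s - q * s\<^sup>2) * c = r * c + w * s"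
  using assms by algebra+


lemma arctan_alg: "(M::real) > 0 \<Longrightarrow> inverse (1 + (N / M)\<^sup>2) * (N' * M / 2 - N * M' / 2) * 2 / (M * M)
   = (N' * M - N * M') / (M\<^sup>2 + N\<^sup>2)"
proof -
  assume M: "M > 0"
  have i: "inverse (1 + (N / M)\<^sup>2) = M\<^sup>2 / (M\<^sup>2 + N\<^sup>2)" using M by (simp add: field_simps power2_eq_square)
  have D: "M\<^sup>2 + N\<^sup>2 > 0" using M by (simp add: add_pos_nonneg)
  have e: "(N' * M / 2 - N * M' / 2) * 2 = N' * M - N * M'" by (simp add: algebra_simps)
  have "inverse (1 + (N / M)\<^sup>2) * (N' * M / 2 - N * M' / 2) * 2 / (M * M)
     = M\<^sup>2 / (M\<^sup>2 + N\<^sup>2) * (N' * M - N * M') / (M * M)" unfolding i e[symmetric] by (simp only: mult.assoc)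
  also have "\<dots> = (N' * M - N * M') / (M\<^sup>2 + N\<^sup>2)" using M D by (simp add: power2_eq_square)
  finally show ?thesis .
qed

definition fB :: "real \<Rightarrow> real \<Rightarrow> real \<Rightarrow> real \<Rightarrow> real \<Rightarrow> real" where
  "fB p q r w x = x + 2 * arctan (Nf p q r w (x / 2) / Mf p q r w (x / 2))"

lemma rep_pos:
  assumes det: "p * w - q * r = 1" and Mpos: "\<And>t. Mf p q r w t > 0"
  shows "rep p q r w (fB p q r w)" "\<And>x. fB p q r w (x + 2 * pi) = fB p q r w x + 2 * pi"
proof -
  let ?M = "\<lambda>x. Mf p q r w (x / 2)" and ?N = "\<lambda>x. Nf p q r w (x / 2)"
  have dM: "(?M has_real_derivative Mf' p q r w (x / 2) / 2) (at x)" for x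
  proof -
    have h: "((\<lambda>x. x / 2) has_real_derivative 1 / 2) (at x)" by (auto intro!: derivative_eq_intros)
    show ?thesis using DERIV_chain2[OF dMf h] by simp
  qed
  have dN: "(?N has_real_derivative Nf' p q r w (x / 2) / 2) (at x)" for x
  proof -
    have h: "((\<lambda>x. x / 2) has_real_derivative 1 / 2) (at x)" by (auto intro!: derivative_eq_intros)
    show ?thesis using DERIV_chain2[OF dNf h] by simp
  qed
  have cs: "(cos (x / 2))\<^sup>2 + (sin (x / 2))\<^sup>2 = 1" for x :: real by simp
  have MN: "(?M x)\<^sup>2 + (?N x)\<^sup>2 = Dm p q r w x" for x
    unfolding Mf_def Nf_def Dm_def using MN_poly(1)[OF cs[of x]] .
  have core: "Nf' p q r w (x / 2) * ?M x - ?N x * Mf' p q r w (x / 2) = 1 - Dm p q r w x" for x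
    unfolding MN[symmetric] unfolding Mf_def Nf_def Mf'_def Nf'_def using core_poly[OF cs[of x] det] by linarith
  have Dp: "Dm p q r w x > 0" for x using Dm_pos[OF det] .
  have d1: "(fB p q r w has_real_derivative
      1 + (Nf' p q r w (x / 2) * ?M x - ?N x * Mf' p q r w (x / 2)) / ((?M x)\<^sup>2 + (?N x)\<^sup>2)) (at x)" for x
  proof -
    have Mne: "Mf p q r w (x / 2) \<noteq> 0" using Mpos[of "x / 2"] by simp
    show ?thesis unfolding fB_def
      apply (auto intro!: derivative_eq_intros dM dN simp: Mne)
      using arctan_alg Mpos[of "x / 2"] by blast
  qed
  have d2: "(fB p q r w has_real_derivative 1 / Dm p q r w x) (at x)" for x
  proof -
    have "1 + (Nf' p q r w (x / 2) * ?M x - ?N x * Mf' p q r w (x / 2)) / ((?M x)\<^sup>2 + (?N x)\<^sup>2)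
      = 1 / Dm p q r w x" unfolding core MN using Dp[of x] by (simp add: field_simps)
    then show ?thesis using d1[of x] by simp
  qed
  have dd: "deriv (fB p q r w) x = 1 / Dm p q r w x" for x using d2 DERIV_imp_deriv by blast
  have cs_eq: "cos (fB p q r w x / 2) / sqrt (deriv (fB p q r w) x) = p * cos (x / 2) + q * sin (x / 2)
     \<and> sin (fB p q r w x / 2) / sqrt (deriv (fB p q r w) x) = r * cos (x / 2) + w * sin (x / 2)" for x
  proof -
    define M where "M = ?M x"
    define N where "N = ?N x"
    define z where "z = N / M"
    have Mp: "M > 0" using Mpos M_def by simp
    have D: "Dm p q r w x = M\<^sup>2 + N\<^sup>2" using MN M_def N_def by simp
    have Dp': "M\<^sup>2 + N\<^sup>2 > 0" using D Dp[of x] by simp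
    have "1 + z\<^sup>2 = (M\<^sup>2 + N\<^sup>2) / M\<^sup>2" unfolding z_def using Mp by (simp add: field_simps)
    then have sz: "sqrt (1 + z\<^sup>2) = sqrt (M\<^sup>2 + N\<^sup>2) / M" using Mp by (simp add: real_sqrt_divide)
    have sd: "sqrt (deriv (fB p q r w) x) = 1 / sqrt (M\<^sup>2 + N\<^sup>2)" unfolding dd D by (simp add: real_sqrt_divide)
    have h: "fB p q r w x / 2 = x / 2 + arctan z" unfolding fB_def z_def M_def N_def by simp
    have sqp: "sqrt (M\<^sup>2 + N\<^sup>2) > 0" using Dp' by simp
    have c1: "cos (fB p q r w x / 2) = (M * cos (x / 2) - N * sin (x / 2)) / sqrt (M\<^sup>2 + N\<^sup>2)"
      unfolding h cos_add cos_arctan sin_arctan sz unfolding z_def using Mp sqp by (simp add: field_simps)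
    have s1: "sin (fB p q r w x / 2) = (M * sin (x / 2) + N * cos (x / 2)) / sqrt (M\<^sup>2 + N\<^sup>2)"
      unfolding h sin_add cos_arctan sin_arctan sz unfolding z_def using Mp sqp by (simp add: field_simps)
    have p1: "M * cos (x / 2) - N * sin (x / 2) = p * cos (x / 2) + q * sin (x / 2)"
      unfolding M_def N_def Mf_def Nf_def using MN_poly(2)[OF cs[of x]] by simp
    have p2: "M * sin (x / 2) + N * cos (x / 2) = r * cos (x / 2) + w * sin (x / 2)"
      unfolding M_def N_def Mf_def Nf_def using MN_poly(3)[OF cs[of x]] by (simp add: algebra_simps)
    show ?thesis unfolding sd c1 s1 p1 p2 using sqp Mp by simp
  qed
  show "rep p q r w (fB p q r w)" unfolding rep_def
    using d2 cs_eq dd Dp real_differentiable_def by auto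
  show "\<And>x. fB p q r w (x + 2 * pi) = fB p q r w x + 2 * pi"
  proof -
    fix x
    have e: "(x + 2 * pi) / 2 = x / 2 + pi" by simp
    show "fB p q r w (x + 2 * pi) = fB p q r w x + 2 * pi"
      unfolding fB_def e Mf_def Nf_def by simp
  qed
qed


lemma pos_quad:
  fixes R X Y c s :: real
  assumes R: "R > 0" and h: "R\<^sup>2 - X\<^sup>2 - Y\<^sup>2 = 1" and cs: "c\<^sup>2 + s\<^sup>2 = 1"
  shows "R * (c\<^sup>2 + s\<^sup>2) + X * (c\<^sup>2 - s\<^sup>2) + Y * (2 * c * s) > 0"
proof -
  define u where "u = c\<^sup>2 - s\<^sup>2"
  define v where "v = 2 * c * s"
  have uv0: "u\<^sup>2 + v\<^sup>2 = (c\<^sup>2 + s\<^sup>2)\<^sup>2" unfolding u_def v_def by (simp add: power2_eq_square algebra_simps)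
  have uv: "u\<^sup>2 + v\<^sup>2 = 1" using uv0 cs by simp
  have idn: "(X\<^sup>2 + Y\<^sup>2) * (u\<^sup>2 + v\<^sup>2) - (X * u + Y * v)\<^sup>2 = (X * v - Y * u)\<^sup>2"
    by (simp add: power2_eq_square algebra_simps)
  have nn: "0 \<le> (X * v - Y * u)\<^sup>2" by simp
  have e1: "(X\<^sup>2 + Y\<^sup>2) * (u\<^sup>2 + v\<^sup>2) = X\<^sup>2 + Y\<^sup>2" using uv by simp
  have lt: "(X * u + Y * v)\<^sup>2 < R\<^sup>2" using idn nn e1 h by linarith
  have "- (X * u + Y * v) < R"
  proof (cases "X * u + Y * v \<ge> 0")
    case True then show ?thesis using R by linarith
  next
    case False
    have l2: "(- (X * u + Y * v))\<^sup>2 < R\<^sup>2" using lt by (simp only: power2_minus)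
    have r0: "0 \<le> R" using R by linarith
    show ?thesis by (rule power2_less_imp_less[OF l2 r0])
  qed
  moreover have "R * (c\<^sup>2 + s\<^sup>2) = R" using cs by simp
  moreover have "R * (c\<^sup>2 + s\<^sup>2) + X * (c\<^sup>2 - s\<^sup>2) + Y * (2 * c * s) = R * (c\<^sup>2 + s\<^sup>2) + (X * u + Y * v)"
    unfolding u_def v_def by (rule add.assoc)
  ultimately show ?thesis by linarith
qed

lemma quad_id: "p * C\<^sup>2 + (q + r) * C * S + w * S\<^sup>2 = (p + w) / 2 * (C\<^sup>2 + S\<^sup>2) + ((p - w) / 2) * (C\<^sup>2 - S\<^sup>2)
        + ((q + r) / 2) * (2 * C * S)" for p q r w C S :: real
  by (simp add: field_simps power2_eq_square)

lemma rep_rot: "rep (cos al) (- sin al) (sin al) (cos al) (\<lambda>x. x + 2 * al)"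
proof -
  have d: "((\<lambda>x. x + 2 * al) has_real_derivative 1) (at x)" for x by (auto intro!: derivative_eq_intros)
  then have dd: "deriv (\<lambda>x. x + 2 * al) x = 1" for x using DERIV_imp_deriv by blast
  have e: "(x + 2 * al) / 2 = x / 2 + al" for x :: real by simp
  show ?thesis unfolding rep_def dd e using d real_differentiable_def
    by (auto simp: cos_add sin_add algebra_simps)
qed

lemma rep_exists:
  assumes det: "a * d - b * c = 1"
  shows "\<exists>f. f \<in> carrier DiffT \<and> (rep a b c d f \<or> rep (-a) (-b) (-c) (-d) f)"
proof -
  define z where "z = Complex ((a + d) / 2) ((c - b) / 2)"
  define R where "R = cmod z"
  have R2: "R\<^sup>2 = ((a + d) / 2)\<^sup>2 + ((c - b) / 2)\<^sup>2" unfolding R_def z_def by (simp add: cmod_power2)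
  have R2': "R\<^sup>2 = 1 + ((a - d) / 2)\<^sup>2 + ((b + c) / 2)\<^sup>2"
    unfolding R2 using det by (simp add: power2_eq_square algebra_simps divide_simps)
  have Rp: "R > 0"
  proof -
    have "R\<^sup>2 > 0" using R2' by (simp add: add_pos_nonneg)
    moreover have "R \<ge> 0" unfolding R_def by simp
    ultimately show ?thesis by (metis less_eq_real_def power_zero_numeral zero_less_power2)
  qed
  then have z0: "z \<noteq> 0" unfolding R_def by simp
  define al where "al = Arg z"
  define ca where "ca = (a + d) / (2 * R)"
  define sa where "sa = (c - b) / (2 * R)"
  have cal: "cos al = ca" unfolding al_def ca_def using cos_Arg[OF z0] unfolding R_def z_def by simp
  have sal: "sin al = sa" unfolding al_def sa_def using sin_Arg[OF z0] unfolding R_def z_def by simp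
  have cs1: "ca\<^sup>2 + sa\<^sup>2 = 1" using sin_cos_squared_add[of al] cal sal by simp
  define p where "p = ca * a + sa * c"
  define q where "q = ca * b + sa * d"
  define r where "r = - sa * a + ca * c"
  define w where "w = - sa * b + ca * d"
  have detB: "p * w - q * r = 1"
  proof -
    have "p * w - q * r = (ca\<^sup>2 + sa\<^sup>2) * (a * d - b * c)"
      unfolding p_def q_def r_def w_def by (simp add: power2_eq_square algebra_simps)
    then show ?thesis using cs1 det by simp
  qed
  have rq: "r = q"
  proof -
    have "r - q = (ca * (c - b) - sa * (a + d))" unfolding r_def q_def by (simp add: algebra_simps)
    also have "\<dots> = 0" unfolding ca_def sa_def using Rp by (simp add: field_simps)
    finally show ?thesis by simp
  qed
  have pw: "(p + w) / 2 = R"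
  proof -
    have "p + w = ca * (a + d) + sa * (c - b)" unfolding p_def w_def by (simp add: algebra_simps)
    also have "\<dots> = (((a + d) / 2)\<^sup>2 + ((c - b) / 2)\<^sup>2) * 2 / R"
      unfolding ca_def sa_def using Rp by (simp add: field_simps power2_eq_square)
    also have "\<dots> = 2 * R" unfolding R2[symmetric] using Rp by (simp add: power2_eq_square)
    finally show ?thesis by simp
  qed
  have RXY: "R\<^sup>2 - ((p - w) / 2)\<^sup>2 - ((q + r) / 2)\<^sup>2 = 1"
  proof -
    have "R\<^sup>2 - ((p - w) / 2)\<^sup>2 - ((q + r) / 2)\<^sup>2 = p * w - q * r"
      unfolding pw[symmetric] rq by (simp add: power2_eq_square algebra_simps divide_simps)
    then show ?thesis using detB by simp
  qed
  have Mpos: "Mf p q r w t > 0" for t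
  proof -
    have "Mf p q r w t = R * ((cos t)\<^sup>2 + (sin t)\<^sup>2) + ((p - w) / 2) * ((cos t)\<^sup>2 - (sin t)\<^sup>2)
        + ((q + r) / 2) * (2 * cos t * sin t)"
      unfolding Mf_def pw[symmetric] by (rule quad_id)
    also have "\<dots> > 0" by (rule pos_quad[OF Rp RXY]) simp
    finally show ?thesis .
  qed
  have rB: "rep p q r w (fB p q r w)" and perB: "\<And>x. fB p q r w (x + 2 * pi) = fB p q r w x + 2 * pi"
    using rep_pos[OF detB Mpos] by blast+
  define f0 where "f0 = (\<lambda>x. x + 2 * al) \<circ> fB p q r w"
  have r0: "rep (cos al * p + - sin al * r) (cos al * q + - sin al * w) (sin al * p + cos al * r) (sin al * q + cos al * w) f0"
    unfolding f0_def by (rule rep_comp[OF rep_rot rB])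
  have e1: "cos al * p + - sin al * r = a" "cos al * q + - sin al * w = b"
    "sin al * p + cos al * r = c" "sin al * q + cos al * w = d"
    unfolding cal sal p_def q_def r_def w_def using cs1 by algebra+
  have r0': "rep a b c d f0" using r0 unfolding e1 .
  have per0: "\<And>x. f0 (x + 2 * pi) = f0 x + 2 * pi" unfolding f0_def using perB by simp
  show ?thesis
    using rep_normalize_carrier[OF r0' per0] rep_normalize[OF r0'] by blast
qed


definition MOB :: "(real \<Rightarrow> real) set" where
  "MOB = {f \<in> carrier DiffT. \<exists>a b c d. a * d - b * c = 1 \<and> rep a b c d f}"

lemma isom_MOB: "c' \<noteq> 0 \<Longrightarrow> isom_plus c' = MOB"
proof
  assume c0: "c' \<noteq> 0"
  show "isom_plus c' \<subseteq> MOB"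
  proof
    fix f assume f: "f \<in> isom_plus c'"
    have fc: "f \<in> carrier DiffT" using f unfolding isom_plus_def by blast
    obtain a b c d where "a * d - b * c = 1" "rep a b c d f" using isom_rep[OF f c0] by blast
    then show "f \<in> MOB" unfolding MOB_def using fc by blast
  qed
  show "MOB \<subseteq> isom_plus c'"
  proof
    fix f assume f: "f \<in> MOB"
    then obtain a b c d where "a * d - b * c = 1" "rep a b c d f" "f \<in> carrier DiffT"
      unfolding MOB_def by blast
    then show "f \<in> isom_plus c'" using rep_isom c0 by blast
  qed
qed

lemma ker_MOB: "c' \<noteq> 0 \<Longrightarrow> ker_S_c c' = MOB"
proof
  assume c0: "c' \<noteq> 0"
  show "ker_S_c c' \<subseteq> MOB"
  proof
    fix f assume f: "f \<in> ker_S_c c'"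
    have fc: "f \<in> carrier DiffT" and S: "\<And>x. S_c c' f x = 0" using f unfolding ker_S_c_def by blast+
    obtain a b c d where "a * d - b * c = 1" "rep a b c d f" using ker_rep[OF fc S c0] by blast
    then show "f \<in> MOB" unfolding MOB_def using fc by blast
  qed
  show "MOB \<subseteq> ker_S_c c'"
  proof
    fix f assume f: "f \<in> MOB"
    then obtain a b c d where "a * d - b * c = 1" "rep a b c d f" "f \<in> carrier DiffT"
      unfolding MOB_def by blast
    then show "f \<in> ker_S_c c'" using rep_ker by blast
  qed
qed

lemma per_int:
  assumes per: "\<And>x. y (x + 2 * pi) = y x + 2 * pi"
  shows "y (x + 2 * pi * of_int k) = y x + 2 * pi * of_int k"
proof -
  have nat: "y (z + 2 * pi * real n) = y z + 2 * pi * real n" for z n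
  proof (induction n)
    case 0 then show ?case by simp
  next
    case (Suc n)
    have e2: "2 * pi * real (Suc n) = 2 * pi * real n + 2 * pi" by (simp add: distrib_left)
    have e: "z + 2 * pi * real (Suc n) = (z + 2 * pi * real n) + 2 * pi" unfolding e2 by (rule add.assoc[symmetric])
    have "y (z + 2 * pi * real (Suc n)) = y (z + 2 * pi * real n) + 2 * pi" unfolding e by (rule per)
    also have "\<dots> = y z + (2 * pi * real n + 2 * pi)" unfolding Suc.IH by (rule add.assoc)
    also have "\<dots> = y z + 2 * pi * real (Suc n)" unfolding e2 ..
    finally show ?case .
  qed
  show ?thesis
  proof (cases "k \<ge> 0")
    case True
    then have k: "of_int k = real (nat k)" by simp
    show ?thesis unfolding k by (rule nat)
  next
    case False
    then have k: "of_int k = - real (nat (- k))" by simp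
    have e: "x + 2 * pi * of_int k + 2 * pi * real (nat (- k)) = x" unfolding k by simp
    have "y (x + 2 * pi * of_int k + 2 * pi * real (nat (- k))) = y (x + 2 * pi * of_int k) + 2 * pi * real (nat (- k))"
      by (rule nat)
    then have "y x = y (x + 2 * pi * of_int k) + 2 * pi * real (nat (- k))" unfolding e .
    then show ?thesis unfolding k by linarith
  qed
qed

lemma normalize_shift: "normalize_lift (\<lambda>x. h x - 2 * pi * of_int k) = normalize_lift h"
proof -
  have "\<lfloor>(h 0 - 2 * pi * of_int k) / (2 * pi)\<rfloor> = \<lfloor>h 0 / (2 * pi)\<rfloor> - k"
  proof -
    have "(h 0 - 2 * pi * of_int k) / (2 * pi) = h 0 / (2 * pi) - of_int k" by (simp add: field_simps)
    then show ?thesis by simp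
  qed
  note fl = this
  show ?thesis unfolding normalize_eq
  proof (rule ext)
    fix x
    show "h x - 2 * pi * of_int k - 2 * pi * of_int \<lfloor>(h 0 - 2 * pi * of_int k) / (2 * pi)\<rfloor>
        = h x - 2 * pi * of_int \<lfloor>h 0 / (2 * pi)\<rfloor>" unfolding fl by (simp add: algebra_simps)
  qed
qed

lemma normalize_id: "0 \<le> f 0 \<Longrightarrow> f 0 < 2 * pi \<Longrightarrow> normalize_lift f = f"
proof -
  assume "0 \<le> f 0" "f 0 < 2 * pi"
  then have "\<lfloor>f 0 / (2 * pi)\<rfloor> = 0" by (simp add: floor_eq_iff)
  then show ?thesis unfolding normalize_eq by simp
qed

lemma DiffT_mult: "f \<otimes>\<^bsub>DiffT\<^esub> g = normalize_lift (f \<circ> g)" by (simp add: DiffT_def)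
lemma DiffT_one: "\<one>\<^bsub>DiffT\<^esub> = id" by (simp add: DiffT_def)

lemma DiffT_assoc:
  assumes y: "y \<in> carrier DiffT"
  shows "normalize_lift (normalize_lift (y \<circ> f) \<circ> g) = normalize_lift (y \<circ> normalize_lift (f \<circ> g))"
proof -
  have "normalize_lift (y \<circ> f) \<circ> g = (\<lambda>x. y (f (g x)) - 2 * pi * of_int \<lfloor>y (f 0) / (2 * pi)\<rfloor>)"
    unfolding normalize_eq by auto
  moreover have "y \<circ> normalize_lift (f \<circ> g) = (\<lambda>x. y (f (g x)) - 2 * pi * of_int \<lfloor>f (g 0) / (2 * pi)\<rfloor>)"
  proof
    fix x
    have "y (f (g x) + 2 * pi * of_int (- \<lfloor>f (g 0) / (2 * pi)\<rfloor>)) = y (f (g x)) + 2 * pi * of_int (- \<lfloor>f (g 0) / (2 * pi)\<rfloor>)"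
      by (rule per_int[of y, OF carrier_props(2)[OF y]])
    then show "(y \<circ> normalize_lift (f \<circ> g)) x = y (f (g x)) - 2 * pi * of_int \<lfloor>f (g 0) / (2 * pi)\<rfloor>"
      unfolding normalize_eq by (simp add: algebra_simps)
  qed
  ultimately show ?thesis
    using normalize_shift[of "\<lambda>x. y (f (g x))"] by simp
qed

lemma id_carrier: "id \<in> carrier DiffT"
proof -
  have r: "rep 1 0 0 1 id" using rep_rot[of 0] by (simp add: id_def)
  show ?thesis by (rule rep_carrier[OF r]) simp_all
qed

lemma id_rep: "rep 1 0 0 1 id" using rep_rot[of 0] by (simp add: id_def)

lemma MOB_mult:
  assumes f: "f \<in> MOB" and g: "g \<in> MOB"
  shows "normalize_lift (f \<circ> g) \<in> MOB"
proof -
  obtain a b c d where d1: "a * d - b * c = 1" and rf: "rep a b c d f" using f unfolding MOB_def by auto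
  obtain a' b' c' d' where d2: "a' * d' - b' * c' = 1" and rg: "rep a' b' c' d' g" using g unfolding MOB_def by auto
  have fc: "f \<in> carrier DiffT" and gc: "g \<in> carrier DiffT" using f g unfolding MOB_def by auto
  have r: "rep (a * a' + b * c') (a * b' + b * d') (c * a' + d * c') (c * b' + d * d') (f \<circ> g)"
    by (rule rep_comp[OF rf rg])
  have per: "\<And>x. (f \<circ> g) (x + 2 * pi) = (f \<circ> g) x + 2 * pi"
    using carrier_props(2)[OF fc] carrier_props(2)[OF gc] by simp
  have det: "(a * a' + b * c') * (c * b' + d * d') - (a * b' + b * d') * (c * a' + d * c') = 1"
  proof -
    have "(a * a' + b * c') * (c * b' + d * d') - (a * b' + b * d') * (c * a' + d * c') = (a * d - b * c) * (a' * d' - b' * c')"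
      by (simp add: algebra_simps)
    then show ?thesis using d1 d2 by simp
  qed
  have "normalize_lift (f \<circ> g) \<in> carrier DiffT" by (rule rep_normalize_carrier[OF r per])
  moreover have "\<exists>a b c d. a * d - b * c = 1 \<and> rep a b c d (normalize_lift (f \<circ> g))"
    using rep_normalize[OF r]
  proof
    assume rn: "rep (a * a' + b * c') (a * b' + b * d') (c * a' + d * c') (c * b' + d * d') (normalize_lift (f \<circ> g))"
    show ?thesis using rn det by blast
  next
    assume rn: "rep (- (a * a' + b * c')) (- (a * b' + b * d')) (- (c * a' + d * c')) (- (c * b' + d * d')) (normalize_lift (f \<circ> g))"
    have "(- (a * a' + b * c')) * (- (c * b' + d * d')) - (- (a * b' + b * d')) * (- (c * a' + d * c')) = 1"
      unfolding minus_mult_minus using det .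
    then show ?thesis using rn by blast
  qed
  ultimately show ?thesis unfolding MOB_def by simp
qed

lemma MOB_inv_exists:
  assumes f: "f \<in> MOB"
  shows "\<exists>g\<in>MOB. normalize_lift (f \<circ> g) = id \<and> normalize_lift (g \<circ> f) = id"
proof -
  obtain a b c d where d1: "a * d - b * c = 1" and rf: "rep a b c d f" using f unfolding MOB_def by auto
  have fc: "f \<in> carrier DiffT" using f unfolding MOB_def by auto
  have "d * a - (- b) * (- c) = 1" using d1 by (simp add: algebra_simps)
  then obtain g where gc: "g \<in> carrier DiffT" and rg: "rep d (-b) (-c) a g \<or> rep (-d) (- (-b)) (- (-c)) (-a) g"
    using rep_exists by blast
  have gM: "g \<in> MOB"
    using rg
  proof
    assume r: "rep d (-b) (-c) a g"
    have "d * a - (-b) * (-c) = 1" using d1 by (simp add: algebra_simps)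
    then show ?thesis using r gc unfolding MOB_def by blast
  next
    assume r: "rep (-d) (- (-b)) (- (-c)) (-a) g"
    have "(-d) * (-a) - (- (-b)) * (- (-c)) = 1" using d1 by (simp add: algebra_simps)
    then show ?thesis using r gc unfolding MOB_def by blast
  qed
  have one: "h = id" if rh: "rep 1 0 0 1 h \<or> rep (-1) 0 0 (-1) h" and hc: "h \<in> carrier DiffT" for h
  proof -
    have "id = h" by (rule rep_unique[OF id_rep]) (use rh carrier_props(4,5)[OF hc] in auto)
    then show ?thesis by simp
  qed
  have perf: "\<And>x. f (x + 2 * pi) = f x + 2 * pi" using carrier_props(2)[OF fc] .
  have perg: "\<And>x. g (x + 2 * pi) = g x + 2 * pi" using carrier_props(2)[OF gc] .
  have per1: "\<And>x. (f \<circ> g) (x + 2 * pi) = (f \<circ> g) x + 2 * pi" using perf perg by simp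
  have per2: "\<And>x. (g \<circ> f) (x + 2 * pi) = (g \<circ> f) x + 2 * pi" using perf perg by simp
  have c1: "normalize_lift (f \<circ> g) = id"
  proof -
    have "rep 1 0 0 1 (f \<circ> g) \<or> rep (-1) 0 0 (-1) (f \<circ> g)"
      using rg
    proof
      assume r: "rep d (-b) (-c) a g"
      show ?thesis using rep_comp[OF rf r] d1 by (simp add: algebra_simps)
    next
      assume r: "rep (-d) (- (-b)) (- (-c)) (-a) g"
      show ?thesis using rep_comp[OF rf r] d1 by (simp add: algebra_simps)
    qed
    then have r2: "rep 1 0 0 1 (f \<circ> g) \<or> rep (-1) (-0) (-0) (-1) (f \<circ> g)" by simp
    have "rep 1 0 0 1 (normalize_lift (f \<circ> g)) \<or> rep (-1) 0 0 (-1) (normalize_lift (f \<circ> g))"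
      using r2
    proof
      assume r: "rep 1 0 0 1 (f \<circ> g)" show ?thesis using rep_normalize[OF r] by auto
    next
      assume r: "rep (-1) (-0) (-0) (-1) (f \<circ> g)" show ?thesis using rep_normalize[OF r] by auto
    qed
    moreover have "normalize_lift (f \<circ> g) \<in> carrier DiffT"
      using r2 rep_normalize_carrier[of _ _ _ _ "f \<circ> g", OF _ per1] by blast
    ultimately show ?thesis using one by blast
  qed
  have c2: "normalize_lift (g \<circ> f) = id"
  proof -
    have "rep 1 0 0 1 (g \<circ> f) \<or> rep (-1) 0 0 (-1) (g \<circ> f)"
      using rg
    proof
      assume r: "rep d (-b) (-c) a g"
      show ?thesis using rep_comp[OF r rf] d1 by (simp add: algebra_simps)
    next
      assume r: "rep (-d) (- (-b)) (- (-c)) (-a) g"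
      show ?thesis using rep_comp[OF r rf] d1 by (simp add: algebra_simps)
    qed
    then have r2: "rep 1 0 0 1 (g \<circ> f) \<or> rep (-1) (-0) (-0) (-1) (g \<circ> f)" by simp
    have "rep 1 0 0 1 (normalize_lift (g \<circ> f)) \<or> rep (-1) 0 0 (-1) (normalize_lift (g \<circ> f))"
      using r2
    proof
      assume r: "rep 1 0 0 1 (g \<circ> f)" show ?thesis using rep_normalize[OF r] by auto
    next
      assume r: "rep (-1) (-0) (-0) (-1) (g \<circ> f)" show ?thesis using rep_normalize[OF r] by auto
    qed
    moreover have "normalize_lift (g \<circ> f) \<in> carrier DiffT"
      using r2 rep_normalize_carrier[of _ _ _ _ "g \<circ> f", OF _ per2] by blast
    ultimately show ?thesis using one by blast
  qed
  show ?thesis using gM c1 c2 by blast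
qed

lemma MOB_subgroup: "subgroup MOB DiffT"
  unfolding subgroup_def
proof (intro conjI allI impI)
  show "MOB \<subseteq> carrier DiffT" unfolding MOB_def by auto
  show "\<And>x y. x \<in> MOB \<Longrightarrow> y \<in> MOB \<Longrightarrow> x \<otimes>\<^bsub>DiffT\<^esub> y \<in> MOB" unfolding DiffT_mult by (rule MOB_mult)
  show "\<one>\<^bsub>DiffT\<^esub> \<in> MOB" unfolding DiffT_one MOB_def using id_carrier id_rep by force
  fix f assume f: "f \<in> MOB"
  obtain g where gM: "g \<in> MOB" and c1: "normalize_lift (f \<circ> g) = id" and c2: "normalize_lift (g \<circ> f) = id"
    using MOB_inv_exists[OF f] by blast
  have gc: "g \<in> carrier DiffT" using gM unfolding MOB_def by auto
  have "inv\<^bsub>DiffT\<^esub> f = g"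
    unfolding m_inv_def DiffT_mult DiffT_one
  proof (rule the_equality)
    show "g \<in> carrier DiffT \<and> normalize_lift (f \<circ> g) = id \<and> normalize_lift (g \<circ> f) = id" using gc c1 c2 by simp
    fix y assume y: "y \<in> carrier DiffT \<and> normalize_lift (f \<circ> y) = id \<and> normalize_lift (y \<circ> f) = id"
    have "y = normalize_lift (y \<circ> id)" using normalize_id carrier_props(4,5) y by (simp add: o_def)
    also have "\<dots> = normalize_lift (y \<circ> normalize_lift (f \<circ> g))" using c1 by simp
    also have "\<dots> = normalize_lift (normalize_lift (y \<circ> f) \<circ> g)"
      by (rule DiffT_assoc[symmetric]) (use y in simp)
    also have "\<dots> = normalize_lift (id \<circ> g)" using y by simp
    also have "\<dots> = normalize_lift g" by simp
    also have "\<dots> = g" using normalize_id carrier_props(4,5)[OF gc] by simp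
    finally show "y = g" .
  qed
  then show "inv\<^bsub>DiffT\<^esub> f \<in> MOB" using gM by simp
qed


definition mk :: "real \<Rightarrow> real \<Rightarrow> real \<Rightarrow> real \<Rightarrow> real^2^2" where
  "mk a b c d = (\<chi> i j. if i = 1 then (if j = 1 then a else b) else (if j = 1 then c else d))"

lemma mk_nth [simp]: "mk a b c d $ 1 $ 1 = a" "mk a b c d $ 1 $ 2 = b" "mk a b c d $ 2 $ 1 = c" "mk a b c d $ 2 $ 2 = d"
  by (simp_all add: mk_def)

lemma mk_eta: "M = mk (M $ 1 $ 1) (M $ 1 $ 2) (M $ 2 $ 1) (M $ 2 $ 2)"
  by (simp add: vec_eq_iff forall_2)

lemma mk_eq: "mk a b c d = mk a' b' c' d' \<longleftrightarrow> a = a' \<and> b = b' \<and> c = c' \<and> d = d'"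
  by (auto simp: vec_eq_iff forall_2)

lemma det_mk: "det (mk a b c d) = a * d - b * c" by (simp add: det_2)

lemma mult_mk: "mk a b c d ** mk a' b' c' d' = mk (a * a' + b * c') (a * b' + b * d') (c * a' + d * c') (c * b' + d * d')"
  by (simp add: vec_eq_iff forall_2 matrix_matrix_mult_def sum_2)

lemma neg_mk: "- mk a b c d = mk (-a) (-b) (-c) (-d)"
  by (simp add: vec_eq_iff forall_2)

lemma mat1_mk: "mat 1 = mk 1 0 0 1"
  by (simp add: vec_eq_iff forall_2 mat_def)

lemma neg_mult_l: "(- A) ** B = - (A ** (B :: real^2^2))"
  by (simp add: vec_eq_iff forall_2 matrix_matrix_mult_def sum_2)

lemma neg_mult_r: "A ** (- B) = - (A ** (B :: real^2^2))"
  by (simp add: vec_eq_iff forall_2 matrix_matrix_mult_def sum_2)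

lemma det_neg2: "det (- (A :: real^2^2)) = det A"
  by (simp add: det_2)

definition Hc :: "(real^2^2) set" where "Hc = {mat 1, - mat 1}"

lemma coset_eq: "Hc #>\<^bsub>SL2R\<^esub> M = {M, - M}"
  unfolding r_coset_def Hc_def SL2R_def by (auto simp: neg_mult_l)

lemma setmult_eq: "{A, - A} <#>\<^bsub>SL2R\<^esub> {B, - B} = {A ** B, - (A ** B)}"
  unfolding set_mult_def SL2R_def by (auto simp: neg_mult_l neg_mult_r)

definition repM :: "real^2^2 \<Rightarrow> (real \<Rightarrow> real) \<Rightarrow> bool" where
  "repM M f = rep (M $ 1 $ 1) (M $ 1 $ 2) (M $ 2 $ 1) (M $ 2 $ 2) f"

definition matf :: "(real \<Rightarrow> real) \<Rightarrow> real^2^2" where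
  "matf f = (SOME M. det M = 1 \<and> repM M f)"

lemma matf_spec:
  assumes "f \<in> MOB" shows "det (matf f) = 1 \<and> repM (matf f) f"
proof -
  obtain a b c d where "a * d - b * c = 1" "rep a b c d f" using assms unfolding MOB_def by blast
  then have "det (mk a b c d) = 1 \<and> repM (mk a b c d) f" by (simp add: det_mk repM_def)
  then show ?thesis unfolding matf_def by (rule someI)
qed

lemma matf_unique:
  assumes "f \<in> MOB" "rep a b c d f" shows "matf f = mk a b c d"
proof -
  have "repM (matf f) f" using matf_spec[OF assms(1)] by simp
  then have "rep (matf f $ 1 $ 1) (matf f $ 1 $ 2) (matf f $ 2 $ 1) (matf f $ 2 $ 2) f" by (simp add: repM_def)
  from rep_mat_unique[OF this assms(2)] show ?thesis by (subst mk_eta) simp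
qed

definition Phi :: "(real \<Rightarrow> real) \<Rightarrow> (real^2^2) set" where
  "Phi f = Hc #>\<^bsub>SL2R\<^esub> matf f"

lemma PSL2R_carrier: "carrier PSL2R = {Hc #>\<^bsub>SL2R\<^esub> M | M. det M = 1}"
  unfolding PSL2R_def FactGroup_def RCOSETS_def Hc_def by (auto simp: SL2R_def)

lemma PSL2R_mult: "X \<otimes>\<^bsub>PSL2R\<^esub> Y = X <#>\<^bsub>SL2R\<^esub> Y"
  unfolding PSL2R_def FactGroup_def by simp

lemma Phi_iso: "Phi \<in> iso (DiffT\<lparr>carrier := MOB\<rparr>) PSL2R"
  unfolding iso_def hom_def bij_betw_def
proof (intro CollectI conjI)
  show "Phi \<in> carrier (DiffT\<lparr>carrier := MOB\<rparr>) \<rightarrow> carrier PSL2R"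
    unfolding PSL2R_carrier Phi_def using matf_spec by auto
  show "\<forall>x\<in>carrier (DiffT\<lparr>carrier := MOB\<rparr>). \<forall>y\<in>carrier (DiffT\<lparr>carrier := MOB\<rparr>).
      Phi (x \<otimes>\<^bsub>DiffT\<lparr>carrier := MOB\<rparr>\<^esub> y) = Phi x \<otimes>\<^bsub>PSL2R\<^esub> Phi y"
  proof (intro ballI)
    fix f g assume f: "f \<in> carrier (DiffT\<lparr>carrier := MOB\<rparr>)" and g: "g \<in> carrier (DiffT\<lparr>carrier := MOB\<rparr>)"
    then have f: "f \<in> MOB" and g: "g \<in> MOB" by simp_all
    have m: "f \<otimes>\<^bsub>DiffT\<lparr>carrier := MOB\<rparr>\<^esub> g = normalize_lift (f \<circ> g)" by (simp add: DiffT_def)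
    define A where "A = matf f"
    define B where "B = matf g"
    have rf: "rep (A $ 1 $ 1) (A $ 1 $ 2) (A $ 2 $ 1) (A $ 2 $ 2) f" using matf_spec[OF f] A_def repM_def by simp
    have rg: "rep (B $ 1 $ 1) (B $ 1 $ 2) (B $ 2 $ 1) (B $ 2 $ 2) g" using matf_spec[OF g] B_def repM_def by simp
    have AB: "A ** B = mk (A $ 1 $ 1 * B $ 1 $ 1 + A $ 1 $ 2 * B $ 2 $ 1) (A $ 1 $ 1 * B $ 1 $ 2 + A $ 1 $ 2 * B $ 2 $ 2)
        (A $ 2 $ 1 * B $ 1 $ 1 + A $ 2 $ 2 * B $ 2 $ 1) (A $ 2 $ 1 * B $ 1 $ 2 + A $ 2 $ 2 * B $ 2 $ 2)"
      by (subst mk_eta[of A], subst mk_eta[of B], rule mult_mk)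
    note rc = rep_comp[OF rf rg]
    have fgM: "normalize_lift (f \<circ> g) \<in> MOB" by (rule MOB_mult[OF f g])
    have "matf (normalize_lift (f \<circ> g)) = A ** B \<or> matf (normalize_lift (f \<circ> g)) = - (A ** B)"
      using rep_normalize[OF rc]
    proof
      assume r: "rep (A $ 1 $ 1 * B $ 1 $ 1 + A $ 1 $ 2 * B $ 2 $ 1) (A $ 1 $ 1 * B $ 1 $ 2 + A $ 1 $ 2 * B $ 2 $ 2)
        (A $ 2 $ 1 * B $ 1 $ 1 + A $ 2 $ 2 * B $ 2 $ 1) (A $ 2 $ 1 * B $ 1 $ 2 + A $ 2 $ 2 * B $ 2 $ 2) (normalize_lift (f \<circ> g))"
      show ?thesis using matf_unique[OF fgM r] AB by simp
    next
      assume r: "rep (- (A $ 1 $ 1 * B $ 1 $ 1 + A $ 1 $ 2 * B $ 2 $ 1)) (- (A $ 1 $ 1 * B $ 1 $ 2 + A $ 1 $ 2 * B $ 2 $ 2))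
        (- (A $ 2 $ 1 * B $ 1 $ 1 + A $ 2 $ 2 * B $ 2 $ 1)) (- (A $ 2 $ 1 * B $ 1 $ 2 + A $ 2 $ 2 * B $ 2 $ 2)) (normalize_lift (f \<circ> g))"
      show ?thesis using matf_unique[OF fgM r] AB neg_mk by simp
    qed
    then have "Phi (normalize_lift (f \<circ> g)) = {A ** B, - (A ** B)}"
      unfolding Phi_def coset_eq by auto
    also have "\<dots> = Phi f <#>\<^bsub>SL2R\<^esub> Phi g"
      unfolding Phi_def coset_eq A_def B_def setmult_eq ..
    finally show "Phi (f \<otimes>\<^bsub>DiffT\<lparr>carrier := MOB\<rparr>\<^esub> g) = Phi f \<otimes>\<^bsub>PSL2R\<^esub> Phi g"
      unfolding m PSL2R_mult .
  qed
  show "inj_on Phi (carrier (DiffT\<lparr>carrier := MOB\<rparr>))"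
  proof (rule inj_onI)
    fix f g assume f: "f \<in> carrier (DiffT\<lparr>carrier := MOB\<rparr>)" and g: "g \<in> carrier (DiffT\<lparr>carrier := MOB\<rparr>)"
      and e: "Phi f = Phi g"
    then have f: "f \<in> MOB" and g: "g \<in> MOB" by simp_all
    have fc: "f \<in> carrier DiffT" and gc: "g \<in> carrier DiffT" using f g unfolding MOB_def by auto
    define A where "A = matf f"
    have rf: "rep (A $ 1 $ 1) (A $ 1 $ 2) (A $ 2 $ 1) (A $ 2 $ 2) f" using matf_spec[OF f] A_def repM_def by simp
    have rg0: "repM (matf g) g" using matf_spec[OF g] by simp
    have "matf g \<in> {A, - A}" using e unfolding Phi_def coset_eq A_def by auto
    then have "rep (A $ 1 $ 1) (A $ 1 $ 2) (A $ 2 $ 1) (A $ 2 $ 2) g \<or> rep (- A $ 1 $ 1) (- A $ 1 $ 2) (- A $ 2 $ 1) (- A $ 2 $ 2) g"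
      using rg0 unfolding repM_def by auto
    then show "f = g" using rep_unique[OF rf] carrier_props(4,5)[OF fc] carrier_props(4,5)[OF gc] by auto
  qed
  show "Phi ` carrier (DiffT\<lparr>carrier := MOB\<rparr>) = carrier PSL2R"
  proof
    show "Phi ` carrier (DiffT\<lparr>carrier := MOB\<rparr>) \<subseteq> carrier PSL2R"
      unfolding PSL2R_carrier Phi_def using matf_spec by auto
    show "carrier PSL2R \<subseteq> Phi ` carrier (DiffT\<lparr>carrier := MOB\<rparr>)"
    proof
      fix X assume "X \<in> carrier PSL2R"
      then obtain M where X: "X = Hc #>\<^bsub>SL2R\<^esub> M" and dM: "det M = 1" unfolding PSL2R_carrier by auto
      have d: "M $ 1 $ 1 * M $ 2 $ 2 - M $ 1 $ 2 * M $ 2 $ 1 = 1" using dM by (simp add: det_2)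
      obtain f where fc: "f \<in> carrier DiffT" and r: "rep (M $ 1 $ 1) (M $ 1 $ 2) (M $ 2 $ 1) (M $ 2 $ 2) f
          \<or> rep (- M $ 1 $ 1) (- M $ 1 $ 2) (- M $ 2 $ 1) (- M $ 2 $ 2) f"
        using rep_exists[OF d] by blast
      have d': "(- M $ 1 $ 1) * (- M $ 2 $ 2) - (- M $ 1 $ 2) * (- M $ 2 $ 1) = 1" using d by simp
      have fM: "f \<in> MOB" using r fc d d' unfolding MOB_def by blast
      have "matf f = M \<or> matf f = - M"
        using r
      proof
        assume r: "rep (M $ 1 $ 1) (M $ 1 $ 2) (M $ 2 $ 1) (M $ 2 $ 2) f"
        show ?thesis using matf_unique[OF fM r] mk_eta[of M] by simp
      next
        assume r: "rep (- M $ 1 $ 1) (- M $ 1 $ 2) (- M $ 2 $ 1) (- M $ 2 $ 2) f"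
        have "matf f = mk (- M $ 1 $ 1) (- M $ 1 $ 2) (- M $ 2 $ 1) (- M $ 2 $ 2)" by (rule matf_unique[OF fM r])
        also have "\<dots> = - M" by (subst (2) mk_eta[of M]) (simp add: neg_mk)
        finally show ?thesis by simp
      qed
      then have "Phi f = X" unfolding Phi_def X coset_eq by auto
      then show "X \<in> Phi ` carrier (DiffT\<lparr>carrier := MOB\<rparr>)" using fM by force
    qed
  qed
qed

theorem mainTheorem8:
  fixes c :: real
  assumes "c \<noteq> 0"
  shows "isom_plus c = ker_S_c c \<and> subgroup (isom_plus c) DiffT
         \<and> DiffT\<lparr>carrier := isom_plus c\<rparr> \<cong> PSL2R"
  using isom_MOB[OF assms] ker_MOB[OF assms] MOB_subgroup Phi_iso is_isoI by auto


end
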